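(* Suppose that $\xi,\eta:G_+\rightarrow G_-$ are two group homomorphisms, and that $r:G_+\times G_+\rightarrow \mathbf{R}^{>0}$ is a function such that for all $u,v,w\in G_+$: $$\,^v\xi(u) = \xi(^{\eta(v)}u),\qquad \eta(v)^u = \eta(v^{\xi(u)}),$$ $$r(uw,v) = r(u,v)\,r(w,v^{\xi(u)}),\qquad r(u,wv) = r(u,v)\,r(^{\eta(v)}u,w).$$ Then $$R=\sum_{u,v\in G_+}r(u,v)\,\{u\left(\eta(v)^{u}\right)^{-1}\}\otimes \{v\xi(u)\}\in H(G;G_+,G_-)\otimes H(G;G_+,G_-)$$ satisfies $(\Delta \otimes id)R = R_{13}R_{23}$ and $(id \otimes \Delta) R = R_{13}R_{12}$. Conversely, if $R\in H(G;G_+,G_-)\otimes H(G;G_+,G_-)$ is invertible, positive, satisfies $(\Delta \otimes id)R = R_{13}R_{23}$ and $(id \otimes \Delta) R = R_{13}R_{12}$, and $R^{-1}$ is also positive, then there exist group homomorphisms $\xi,\eta:G_+\to G_-$ and a function $r:G_+\times G_+\to\mathbf{R}^{>0}$ satisfying the four identities above such that $R=\sum_{u,v\in G_+}r(u,v)\,\{u\left(\eta(v)^{u}\right)^{-1}\}\otimes \{v\xi(u)\}$.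
   Context: $G$ is a finite group with a unique factorization $G=G_+G_-$ (subgroups $G_+,G_-$ such that every $g\in G$ is uniquely $g=g_+g_-$ with $g_\pm\in G_\pm$; also uniquely $g=\bar g_-\bar g_+$). The induced mutual actions are defined by $g_+g_-=\left(^{g_+}g_-\right)\left(g_+^{\,g_-}\right)$ and $g_-g_+=\left(^{g_-}g_+\right)\left(g_-^{\,g_+}\right)$ (left/right actions of $G_+$ and $G_-$ on each other). $H(G;G_+,G_-)$ is the Hopf algebra with basis $\{g\}$, $g\in G$, multiplication $\{g\}\{h\}=\delta_{g_+^{g_-},h_+}\{gh_-\}$, unit $1=\sum_{g_+\in G_+}\{g_+\}$, comultiplication $\Delta\{g\}=\sum_{h_+\in G_+}\{g_+h_+^{-1}(^{h_+}g_-)\}\otimes\{h_+g_-\}$, counit $\epsilon\{g\}=\delta_{g_+,e}$, antipode $S\{g\}=\{g^{-1}\}$. An element of $H\otimes H$ is positive if it is a non-negative linear combination of the $\{g\}\otimes\{h\}$. *)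

theory Defs
  imports "HOL-Algebra.Algebra"
begin

definition unique_factorization :: "'a monoid \<Rightarrow> 'a set \<Rightarrow> 'a set \<Rightarrow> bool" where
  "unique_factorization G Gp Gm \<longleftrightarrow>
     group G \<and> finite (carrier G) \<and> subgroup Gp G \<and> subgroup Gm G \<and>
     (\<forall>g\<in>carrier G. \<exists>!p. fst p \<in> Gp \<and> snd p \<in> Gm \<and> g = fst p \<otimes>\<^bsub>G\<^esub> snd p) \<and>
     (\<forall>g\<in>carrier G. \<exists>!p. fst p \<in> Gm \<and> snd p \<in> Gp \<and> g = fst p \<otimes>\<^bsub>G\<^esub> snd p)"

definition fplus :: "'a monoid \<Rightarrow> 'a set \<Rightarrow> 'a set \<Rightarrow> 'a \<Rightarrow> 'a" where
  "fplus G Gp Gm g = (THE a. a \<in> Gp \<and> (\<exists>b\<in>Gm. g = a \<otimes>\<^bsub>G\<^esub> b))"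
definition fminus :: "'a monoid \<Rightarrow> 'a set \<Rightarrow> 'a set \<Rightarrow> 'a \<Rightarrow> 'a" where
  "fminus G Gp Gm g = (THE b. b \<in> Gm \<and> (\<exists>a\<in>Gp. g = a \<otimes>\<^bsub>G\<^esub> b))"

definition bminus :: "'a monoid \<Rightarrow> 'a set \<Rightarrow> 'a set \<Rightarrow> 'a \<Rightarrow> 'a" where
  "bminus G Gp Gm g = (THE b. b \<in> Gm \<and> (\<exists>a\<in>Gp. g = b \<otimes>\<^bsub>G\<^esub> a))"
definition bplus :: "'a monoid \<Rightarrow> 'a set \<Rightarrow> 'a set \<Rightarrow> 'a \<Rightarrow> 'a" where
  "bplus G Gp Gm g = (THE a. a \<in> Gp \<and> (\<exists>b\<in>Gm. g = b \<otimes>\<^bsub>G\<^esub> a))"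

text \<open>Mutual actions. For a in G+, b in G-:
  a b = (^a b)(a^b)  with ^a b in G-, a^b in G+;
  b a = (^b a)(b^a)  with ^b a in G+, b^a in G-.\<close>
definition lact_pm :: "'a monoid \<Rightarrow> 'a set \<Rightarrow> 'a set \<Rightarrow> 'a \<Rightarrow> 'a \<Rightarrow> 'a" where
  "lact_pm G Gp Gm a b = bminus G Gp Gm (a \<otimes>\<^bsub>G\<^esub> b)"
definition ract_pm :: "'a monoid \<Rightarrow> 'a set \<Rightarrow> 'a set \<Rightarrow> 'a \<Rightarrow> 'a \<Rightarrow> 'a" where
  "ract_pm G Gp Gm a b = bplus G Gp Gm (a \<otimes>\<^bsub>G\<^esub> b)"
definition lact_mp :: "'a monoid \<Rightarrow> 'a set \<Rightarrow> 'a set \<Rightarrow> 'a \<Rightarrow> 'a \<Rightarrow> 'a" where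
  "lact_mp G Gp Gm b a = fplus G Gp Gm (b \<otimes>\<^bsub>G\<^esub> a)"
definition ract_mp :: "'a monoid \<Rightarrow> 'a set \<Rightarrow> 'a set \<Rightarrow> 'a \<Rightarrow> 'a \<Rightarrow> 'a" where
  "ract_mp G Gp Gm b a = fminus G Gp Gm (b \<otimes>\<^bsub>G\<^esub> a)"

text \<open>Elements of H are coefficient functions on carrier G; elements of H (x) H and
  H (x) H (x) H are coefficient functions of 2 resp. 3 arguments.\<close>

text \<open>Structure constant: coefficient of {k} in {g}{h}.\<close>
definition hmc :: "'a monoid \<Rightarrow> 'a set \<Rightarrow> 'a set \<Rightarrow> 'a \<Rightarrow> 'a \<Rightarrow> 'a \<Rightarrow> real" where
  "hmc G Gp Gm g h k =
     (if ract_pm G Gp Gm (fplus G Gp Gm g) (fminus G Gp Gm g) = fplus G Gp Gm h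
         \<and> k = g \<otimes>\<^bsub>G\<^esub> fminus G Gp Gm h then 1 else 0)"

text \<open>Coefficient of {a} (x) {b} in Delta {g}.\<close>
definition dc :: "'a monoid \<Rightarrow> 'a set \<Rightarrow> 'a set \<Rightarrow> 'a \<Rightarrow> 'a \<Rightarrow> 'a \<Rightarrow> real" where
  "dc G Gp Gm g a b =
     (\<Sum>h\<in>Gp. if a = fplus G Gp Gm g \<otimes>\<^bsub>G\<^esub> inv\<^bsub>G\<^esub> h \<otimes>\<^bsub>G\<^esub> lact_pm G Gp Gm h (fminus G Gp Gm g)
                 \<and> b = h \<otimes>\<^bsub>G\<^esub> fminus G Gp Gm g then 1 else 0)"

definition tens2 :: "'a monoid \<Rightarrow> ('a \<Rightarrow> 'a \<Rightarrow> real) set" where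
  "tens2 G = {R. \<forall>a b. R a b \<noteq> 0 \<longrightarrow> a \<in> carrier G \<and> b \<in> carrier G}"

definition positive2 :: "('a \<Rightarrow> 'a \<Rightarrow> real) \<Rightarrow> bool" where
  "positive2 R \<longleftrightarrow> (\<forall>a b. R a b \<ge> 0)"

definition mult2 :: "'a monoid \<Rightarrow> 'a set \<Rightarrow> 'a set \<Rightarrow> ('a \<Rightarrow> 'a \<Rightarrow> real) \<Rightarrow> ('a \<Rightarrow> 'a \<Rightarrow> real) \<Rightarrow> 'a \<Rightarrow> 'a \<Rightarrow> real" where
  "mult2 G Gp Gm R S a b =
     (\<Sum>g1\<in>carrier G. \<Sum>g2\<in>carrier G. \<Sum>h1\<in>carrier G. \<Sum>h2\<in>carrier G.
        R g1 g2 * S h1 h2 * hmc G Gp Gm g1 h1 a * hmc G Gp Gm g2 h2 b)"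

definition one2 :: "'a set \<Rightarrow> 'a \<Rightarrow> 'a \<Rightarrow> real" where
  "one2 Gp a b = (if a \<in> Gp \<and> b \<in> Gp then 1 else 0)"

definition mult3 :: "'a monoid \<Rightarrow> 'a set \<Rightarrow> 'a set \<Rightarrow> ('a \<Rightarrow> 'a \<Rightarrow> 'a \<Rightarrow> real) \<Rightarrow> ('a \<Rightarrow> 'a \<Rightarrow> 'a \<Rightarrow> real) \<Rightarrow> 'a \<Rightarrow> 'a \<Rightarrow> 'a \<Rightarrow> real" where
  "mult3 G Gp Gm P Q a b c =
     (\<Sum>g1\<in>carrier G. \<Sum>g2\<in>carrier G. \<Sum>g3\<in>carrier G. \<Sum>h1\<in>carrier G. \<Sum>h2\<in>carrier G. \<Sum>h3\<in>carrier G.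
        P g1 g2 g3 * Q h1 h2 h3 * hmc G Gp Gm g1 h1 a * hmc G Gp Gm g2 h2 b * hmc G Gp Gm g3 h3 c)"

text \<open>Legs: 1 = sum of {u}, u in G+.\<close>
definition leg12 :: "'a set \<Rightarrow> ('a \<Rightarrow> 'a \<Rightarrow> real) \<Rightarrow> 'a \<Rightarrow> 'a \<Rightarrow> 'a \<Rightarrow> real" where
  "leg12 Gp R a b c = R a b * (if c \<in> Gp then 1 else 0)"
definition leg13 :: "'a set \<Rightarrow> ('a \<Rightarrow> 'a \<Rightarrow> real) \<Rightarrow> 'a \<Rightarrow> 'a \<Rightarrow> 'a \<Rightarrow> real" where
  "leg13 Gp R a b c = R a c * (if b \<in> Gp then 1 else 0)"
definition leg23 :: "'a set \<Rightarrow> ('a \<Rightarrow> 'a \<Rightarrow> real) \<Rightarrow> 'a \<Rightarrow> 'a \<Rightarrow> 'a \<Rightarrow> real" where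
  "leg23 Gp R a b c = (if a \<in> Gp then 1 else 0) * R b c"

definition delta_id :: "'a monoid \<Rightarrow> 'a set \<Rightarrow> 'a set \<Rightarrow> ('a \<Rightarrow> 'a \<Rightarrow> real) \<Rightarrow> 'a \<Rightarrow> 'a \<Rightarrow> 'a \<Rightarrow> real" where
  "delta_id G Gp Gm R a b c = (\<Sum>g\<in>carrier G. \<Sum>g'\<in>carrier G.
       R g g' * dc G Gp Gm g a b * (if c = g' then 1 else 0))"
definition id_delta :: "'a monoid \<Rightarrow> 'a set \<Rightarrow> 'a set \<Rightarrow> ('a \<Rightarrow> 'a \<Rightarrow> real) \<Rightarrow> 'a \<Rightarrow> 'a \<Rightarrow> 'a \<Rightarrow> real" where
  "id_delta G Gp Gm R a b c = (\<Sum>g'\<in>carrier G. \<Sum>g\<in>carrier G.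
       R g' g * (if a = g' then 1 else 0) * dc G Gp Gm g b c)"

definition admissible_data :: "'a monoid \<Rightarrow> 'a set \<Rightarrow> 'a set \<Rightarrow> ('a \<Rightarrow> 'a) \<Rightarrow> ('a \<Rightarrow> 'a) \<Rightarrow> ('a \<Rightarrow> 'a \<Rightarrow> real) \<Rightarrow> bool" where
  "admissible_data G Gp Gm \<xi> \<eta> r \<longleftrightarrow>
     \<xi> \<in> hom (G\<lparr>carrier := Gp\<rparr>) (G\<lparr>carrier := Gm\<rparr>) \<and>
     \<eta> \<in> hom (G\<lparr>carrier := Gp\<rparr>) (G\<lparr>carrier := Gm\<rparr>) \<and>
     (\<forall>u\<in>Gp. \<forall>v\<in>Gp. r u v > 0) \<and>
     (\<forall>u\<in>Gp. \<forall>v\<in>Gp. \<forall>w\<in>Gp.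
        lact_pm G Gp Gm v (\<xi> u) = \<xi> (lact_mp G Gp Gm (\<eta> v) u) \<and>
        ract_mp G Gp Gm (\<eta> v) u = \<eta> (ract_pm G Gp Gm v (\<xi> u)) \<and>
        r (u \<otimes>\<^bsub>G\<^esub> w) v = r u v * r w (ract_pm G Gp Gm v (\<xi> u)) \<and>
        r u (w \<otimes>\<^bsub>G\<^esub> v) = r u v * r (lact_mp G Gp Gm (\<eta> v) u) w)"

definition R_of :: "'a monoid \<Rightarrow> 'a set \<Rightarrow> 'a set \<Rightarrow> ('a \<Rightarrow> 'a) \<Rightarrow> ('a \<Rightarrow> 'a) \<Rightarrow> ('a \<Rightarrow> 'a \<Rightarrow> real) \<Rightarrow> 'a \<Rightarrow> 'a \<Rightarrow> real" where
  "R_of G Gp Gm \<xi> \<eta> r a b = (\<Sum>u\<in>Gp. \<Sum>v\<in>Gp.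
       r u v * (if a = u \<otimes>\<^bsub>G\<^esub> inv\<^bsub>G\<^esub> (ract_mp G Gp Gm (\<eta> v) u)
                   \<and> b = v \<otimes>\<^bsub>G\<^esub> \<xi> u then 1 else 0))"

end

theory Submission
  imports Defs
begin



definition sec2 :: "'a monoid \<Rightarrow> 'a set \<Rightarrow> 'a set \<Rightarrow> ('a \<Rightarrow> 'a \<Rightarrow> real) \<Rightarrow> ('a \<Rightarrow> 'a \<Rightarrow> 'a) \<Rightarrow> ('a \<Rightarrow> 'a \<Rightarrow> 'a) \<Rightarrow> 'a \<Rightarrow> 'a \<Rightarrow> real" where
  "sec2 G Gp Gm t A B a b = (if a \<in> carrier G \<and> b \<in> carrier G \<and>
      fminus G Gp Gm a = A (fplus G Gp Gm a) (fplus G Gp Gm b) \<and>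
      fminus G Gp Gm b = B (fplus G Gp Gm a) (fplus G Gp Gm b)
    then t (fplus G Gp Gm a) (fplus G Gp Gm b) else 0)"

definition sec3 :: "'a monoid \<Rightarrow> 'a set \<Rightarrow> 'a set \<Rightarrow> ('a \<Rightarrow> 'a \<Rightarrow> 'a \<Rightarrow> real) \<Rightarrow> ('a \<Rightarrow> 'a \<Rightarrow> 'a \<Rightarrow> 'a) \<Rightarrow> ('a \<Rightarrow> 'a \<Rightarrow> 'a \<Rightarrow> 'a) \<Rightarrow> ('a \<Rightarrow> 'a \<Rightarrow> 'a \<Rightarrow> 'a) \<Rightarrow> 'a \<Rightarrow> 'a \<Rightarrow> 'a \<Rightarrow> real" where
  "sec3 G Gp Gm t A1 A2 A3 a b c = (if a \<in> carrier G \<and> b \<in> carrier G \<and> c \<in> carrier G \<and>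
      fminus G Gp Gm a = A1 (fplus G Gp Gm a) (fplus G Gp Gm b) (fplus G Gp Gm c) \<and>
      fminus G Gp Gm b = A2 (fplus G Gp Gm a) (fplus G Gp Gm b) (fplus G Gp Gm c) \<and>
      fminus G Gp Gm c = A3 (fplus G Gp Gm a) (fplus G Gp Gm b) (fplus G Gp Gm c)
    then t (fplus G Gp Gm a) (fplus G Gp Gm b) (fplus G Gp Gm c) else 0)"

lemma sum1: assumes "finite S" "\<And>x. x \<in> S \<Longrightarrow> f x \<noteq> 0 \<Longrightarrow> x = x0"
  shows "sum f S = (if x0 \<in> S then f x0 else (0::real))"
proof (cases "x0 \<in> S")
  case True
  have "sum f S = f x0 + sum f (S - {x0})" using assms(1) True by (rule sum.remove)
  moreover have "sum f (S - {x0}) = 0"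
  proof (rule sum.neutral, rule ballI)
    fix x assume "x \<in> S - {x0}" then show "f x = 0" using assms(2) by blast
  qed
  ultimately show ?thesis using True by simp
next
  case False
  have "sum f S = 0"
  proof (rule sum.neutral, rule ballI)
    fix x assume "x \<in> S" then show "f x = 0" using assms(2) False by blast
  qed
  then show ?thesis using False by simp
qed

lemma sum_nz: "sum f S \<noteq> (0::real) \<Longrightarrow> \<exists>x\<in>S. f x \<noteq> 0"
  using sum.not_neutral_contains_not_neutral by blast

lemma sum2: assumes "finite S1" "finite S2"
  "\<And>x y. x \<in> S1 \<Longrightarrow> y \<in> S2 \<Longrightarrow> F x y \<noteq> 0 \<Longrightarrow> x = x0 \<and> y = y0"
  shows "(\<Sum>x\<in>S1. \<Sum>y\<in>S2. F x y) = (if x0 \<in> S1 \<and> y0 \<in> S2 then F x0 y0 else (0::real))"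
proof -
  have i: "(\<Sum>y\<in>S2. F x y) = (if y0 \<in> S2 then F x y0 else 0)" if "x \<in> S1" for x
    using assms(2) by (rule sum1) (use assms(3)[OF that] in blast)
  have "(\<Sum>x\<in>S1. \<Sum>y\<in>S2. F x y) = (\<Sum>x\<in>S1. if y0 \<in> S2 then F x y0 else 0)"
    using i by (rule sum.cong[OF refl])
  also have "\<dots> = (if x0 \<in> S1 then (if y0 \<in> S2 then F x0 y0 else 0) else 0)"
    using assms(1) by (rule sum1) (metis (no_types, lifting) assms(3))
  finally show ?thesis by simp
qed

lemma sum3: assumes "finite S1" "finite S2" "finite S3"
  "\<And>x y z. x \<in> S1 \<Longrightarrow> y \<in> S2 \<Longrightarrow> z \<in> S3 \<Longrightarrow> F x y z \<noteq> 0 \<Longrightarrow> x = x0 \<and> y = y0 \<and> z = z0"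
  shows "(\<Sum>x\<in>S1. \<Sum>y\<in>S2. \<Sum>z\<in>S3. F x y z) = (if x0 \<in> S1 \<and> y0 \<in> S2 \<and> z0 \<in> S3 then F x0 y0 z0 else (0::real))"
proof -
  have i: "(\<Sum>y\<in>S2. \<Sum>z\<in>S3. F x y z) = (if y0 \<in> S2 \<and> z0 \<in> S3 then F x y0 z0 else 0)" if "x \<in> S1" for x
    using assms(2) assms(3) by (rule sum2) (use assms(4)[OF that] in blast)
  have "(\<Sum>x\<in>S1. \<Sum>y\<in>S2. \<Sum>z\<in>S3. F x y z) = (\<Sum>x\<in>S1. if y0 \<in> S2 \<and> z0 \<in> S3 then F x y0 z0 else 0)"
    using i by (rule sum.cong[OF refl])
  also have "\<dots> = (if x0 \<in> S1 then (if y0 \<in> S2 \<and> z0 \<in> S3 then F x0 y0 z0 else 0) else 0)"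
    using assms(1) by (rule sum1) (metis (no_types, lifting) assms(4))
  finally show ?thesis by simp
qed

lemma sum4: assumes "finite S1" "finite S2" "finite S3" "finite S4"
  "\<And>x y z p. x \<in> S1 \<Longrightarrow> y \<in> S2 \<Longrightarrow> z \<in> S3 \<Longrightarrow> p \<in> S4 \<Longrightarrow> F x y z p \<noteq> 0 \<Longrightarrow> x = x0 \<and> y = y0 \<and> z = z0 \<and> p = p0"
  shows "(\<Sum>x\<in>S1. \<Sum>y\<in>S2. \<Sum>z\<in>S3. \<Sum>p\<in>S4. F x y z p) = (if x0 \<in> S1 \<and> y0 \<in> S2 \<and> z0 \<in> S3 \<and> p0 \<in> S4 then F x0 y0 z0 p0 else (0::real))"
proof -
  have i: "(\<Sum>y\<in>S2. \<Sum>z\<in>S3. \<Sum>p\<in>S4. F x y z p) = (if y0 \<in> S2 \<and> z0 \<in> S3 \<and> p0 \<in> S4 then F x y0 z0 p0 else 0)" if "x \<in> S1" for x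
    using assms(2) assms(3) assms(4) by (rule sum3) (use assms(5)[OF that] in blast)
  have "(\<Sum>x\<in>S1. \<Sum>y\<in>S2. \<Sum>z\<in>S3. \<Sum>p\<in>S4. F x y z p) = (\<Sum>x\<in>S1. if y0 \<in> S2 \<and> z0 \<in> S3 \<and> p0 \<in> S4 then F x y0 z0 p0 else 0)"
    using i by (rule sum.cong[OF refl])
  also have "\<dots> = (if x0 \<in> S1 then (if y0 \<in> S2 \<and> z0 \<in> S3 \<and> p0 \<in> S4 then F x0 y0 z0 p0 else 0) else 0)"
    using assms(1) by (rule sum1) (metis (no_types, lifting) assms(5))
  finally show ?thesis by simp
qed

lemma sum5: assumes "finite S1" "finite S2" "finite S3" "finite S4" "finite S5"
  "\<And>x y z p q. x \<in> S1 \<Longrightarrow> y \<in> S2 \<Longrightarrow> z \<in> S3 \<Longrightarrow> p \<in> S4 \<Longrightarrow> q \<in> S5 \<Longrightarrow> F x y z p q \<noteq> 0 \<Longrightarrow> x = x0 \<and> y = y0 \<and> z = z0 \<and> p = p0 \<and> q = q0"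
  shows "(\<Sum>x\<in>S1. \<Sum>y\<in>S2. \<Sum>z\<in>S3. \<Sum>p\<in>S4. \<Sum>q\<in>S5. F x y z p q) = (if x0 \<in> S1 \<and> y0 \<in> S2 \<and> z0 \<in> S3 \<and> p0 \<in> S4 \<and> q0 \<in> S5 then F x0 y0 z0 p0 q0 else (0::real))"
proof -
  have i: "(\<Sum>y\<in>S2. \<Sum>z\<in>S3. \<Sum>p\<in>S4. \<Sum>q\<in>S5. F x y z p q) = (if y0 \<in> S2 \<and> z0 \<in> S3 \<and> p0 \<in> S4 \<and> q0 \<in> S5 then F x y0 z0 p0 q0 else 0)" if "x \<in> S1" for x
    using assms(2) assms(3) assms(4) assms(5) by (rule sum4) (use assms(6)[OF that] in blast)
  have "(\<Sum>x\<in>S1. \<Sum>y\<in>S2. \<Sum>z\<in>S3. \<Sum>p\<in>S4. \<Sum>q\<in>S5. F x y z p q) = (\<Sum>x\<in>S1. if y0 \<in> S2 \<and> z0 \<in> S3 \<and> p0 \<in> S4 \<and> q0 \<in> S5 then F x y0 z0 p0 q0 else 0)"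
    using i by (rule sum.cong[OF refl])
  also have "\<dots> = (if x0 \<in> S1 then (if y0 \<in> S2 \<and> z0 \<in> S3 \<and> p0 \<in> S4 \<and> q0 \<in> S5 then F x0 y0 z0 p0 q0 else 0) else 0)"
    using assms(1) by (rule sum1) (metis (no_types, lifting) assms(6))
  finally show ?thesis by simp
qed

lemma sum6: assumes "finite S1" "finite S2" "finite S3" "finite S4" "finite S5" "finite S6"
  "\<And>x y z p q r. x \<in> S1 \<Longrightarrow> y \<in> S2 \<Longrightarrow> z \<in> S3 \<Longrightarrow> p \<in> S4 \<Longrightarrow> q \<in> S5 \<Longrightarrow> r \<in> S6 \<Longrightarrow> F x y z p q r \<noteq> 0 \<Longrightarrow> x = x0 \<and> y = y0 \<and> z = z0 \<and> p = p0 \<and> q = q0 \<and> r = r0"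
  shows "(\<Sum>x\<in>S1. \<Sum>y\<in>S2. \<Sum>z\<in>S3. \<Sum>p\<in>S4. \<Sum>q\<in>S5. \<Sum>r\<in>S6. F x y z p q r) = (if x0 \<in> S1 \<and> y0 \<in> S2 \<and> z0 \<in> S3 \<and> p0 \<in> S4 \<and> q0 \<in> S5 \<and> r0 \<in> S6 then F x0 y0 z0 p0 q0 r0 else (0::real))"
proof -
  have i: "(\<Sum>y\<in>S2. \<Sum>z\<in>S3. \<Sum>p\<in>S4. \<Sum>q\<in>S5. \<Sum>r\<in>S6. F x y z p q r) = (if y0 \<in> S2 \<and> z0 \<in> S3 \<and> p0 \<in> S4 \<and> q0 \<in> S5 \<and> r0 \<in> S6 then F x y0 z0 p0 q0 r0 else 0)" if "x \<in> S1" for x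
    using assms(2) assms(3) assms(4) assms(5) assms(6) by (rule sum5) (use assms(7)[OF that] in blast)
  have "(\<Sum>x\<in>S1. \<Sum>y\<in>S2. \<Sum>z\<in>S3. \<Sum>p\<in>S4. \<Sum>q\<in>S5. \<Sum>r\<in>S6. F x y z p q r) = (\<Sum>x\<in>S1. if y0 \<in> S2 \<and> z0 \<in> S3 \<and> p0 \<in> S4 \<and> q0 \<in> S5 \<and> r0 \<in> S6 then F x y0 z0 p0 q0 r0 else 0)"
    using i by (rule sum.cong[OF refl])
  also have "\<dots> = (if x0 \<in> S1 then (if y0 \<in> S2 \<and> z0 \<in> S3 \<and> p0 \<in> S4 \<and> q0 \<in> S5 \<and> r0 \<in> S6 then F x0 y0 z0 p0 q0 r0 else 0) else 0)"
    using assms(1) by (rule sum1) (metis (no_types, lifting) assms(7))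
  finally show ?thesis by simp
qed

locale UF = fixes G :: "'a monoid" (structure) and Gp Gm :: "'a set"
  assumes uf: "unique_factorization G Gp Gm"

sublocale UF \<subseteq> group G using uf unfolding unique_factorization_def by auto

context UF begin

abbreviation "fp \<equiv> fplus G Gp Gm"
abbreviation "fm \<equiv> fminus G Gp Gm"
abbreviation "bp \<equiv> bplus G Gp Gm"
abbreviation "bm \<equiv> bminus G Gp Gm"

lemma fin: "finite (carrier G)" using uf unfolding unique_factorization_def by auto
lemma sgp: "subgroup Gp G" using uf unfolding unique_factorization_def by auto
lemma sgm: "subgroup Gm G" using uf unfolding unique_factorization_def by auto
lemma Gp_sub: "Gp \<subseteq> carrier G" using sgp subgroup.subset by blast
lemma Gm_sub: "Gm \<subseteq> carrier G" using sgm subgroup.subset by blast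
lemma Gp_c[simp]: "x \<in> Gp \<Longrightarrow> x \<in> carrier G" using Gp_sub by (rule subsetD)
lemma Gm_c[simp]: "x \<in> Gm \<Longrightarrow> x \<in> carrier G" using Gm_sub by (rule subsetD)
lemma finGp: "finite Gp" using finite_subset[OF Gp_sub fin] .
lemma Gp_one[simp]: "\<one> \<in> Gp" by (rule subgroup.one_closed[OF sgp])
lemma Gm_one[simp]: "\<one> \<in> Gm" by (rule subgroup.one_closed[OF sgm])
lemma Gp_mult[simp]: "x \<in> Gp \<Longrightarrow> y \<in> Gp \<Longrightarrow> x \<otimes> y \<in> Gp" by (rule subgroup.m_closed[OF sgp])
lemma Gm_mult[simp]: "x \<in> Gm \<Longrightarrow> y \<in> Gm \<Longrightarrow> x \<otimes> y \<in> Gm" by (rule subgroup.m_closed[OF sgm])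
lemma Gp_inv[simp]: "x \<in> Gp \<Longrightarrow> inv x \<in> Gp" by (rule subgroup.m_inv_closed[OF sgp])
lemma Gm_inv[simp]: "x \<in> Gm \<Longrightarrow> inv x \<in> Gm" by (rule subgroup.m_inv_closed[OF sgm])

lemma fact_uniq:
  assumes "a \<in> Gp" "b \<in> Gm" "a' \<in> Gp" "b' \<in> Gm" "a \<otimes> b = a' \<otimes> b'"
  shows "a = a' \<and> b = b'"
proof -
  have "a \<otimes> b \<in> carrier G" using assms by simp
  then have "\<exists>!p. fst p \<in> Gp \<and> snd p \<in> Gm \<and> a \<otimes> b = fst p \<otimes> snd p"
    using uf unfolding unique_factorization_def by blast
  then have "(a,b) = (a',b')" using assms by (metis fst_conv snd_conv)
  then show ?thesis by simp
qed

lemma bfact_uniq: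
  assumes "a \<in> Gp" "b \<in> Gm" "a' \<in> Gp" "b' \<in> Gm" "b \<otimes> a = b' \<otimes> a'"
  shows "a = a' \<and> b = b'"
proof -
  have "b \<otimes> a \<in> carrier G" using assms by simp
  then have "\<exists>!p. fst p \<in> Gm \<and> snd p \<in> Gp \<and> b \<otimes> a = fst p \<otimes> snd p"
    using uf unfolding unique_factorization_def by blast
  then have "(b,a) = (b',a')" using assms by (metis fst_conv snd_conv)
  then show ?thesis by simp
qed

lemma fact_ex: "g \<in> carrier G \<Longrightarrow> \<exists>a\<in>Gp. \<exists>b\<in>Gm. g = a \<otimes> b"
  using uf unfolding unique_factorization_def by (metis prod.collapse)
lemma bfact_ex: "g \<in> carrier G \<Longrightarrow> \<exists>a\<in>Gp. \<exists>b\<in>Gm. g = b \<otimes> a"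
  using uf unfolding unique_factorization_def by (metis prod.collapse)

lemma fp_eq[simp]: assumes "a \<in> Gp" "b \<in> Gm" shows "fp (a \<otimes> b) = a"
  unfolding fplus_def
proof (rule the_equality)
  show "a \<in> Gp \<and> (\<exists>b'\<in>Gm. a \<otimes> b = a \<otimes> b')" using assms by blast
  fix x assume "x \<in> Gp \<and> (\<exists>b'\<in>Gm. a \<otimes> b = x \<otimes> b')"
  then obtain b' where "x \<in> Gp" "b' \<in> Gm" "a \<otimes> b = x \<otimes> b'" by blast
  then show "x = a" using fact_uniq[of a b x b'] assms by simp
qed
lemma fm_eq[simp]: assumes "a \<in> Gp" "b \<in> Gm" shows "fm (a \<otimes> b) = b"
  unfolding fminus_def
proof (rule the_equality)
  show "b \<in> Gm \<and> (\<exists>a'\<in>Gp. a \<otimes> b = a' \<otimes> b)" using assms by blast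
  fix x assume "x \<in> Gm \<and> (\<exists>a'\<in>Gp. a \<otimes> b = a' \<otimes> x)"
  then obtain a' where "x \<in> Gm" "a' \<in> Gp" "a \<otimes> b = a' \<otimes> x" by blast
  then show "x = b" using fact_uniq[of a b a' x] assms by simp
qed
lemma bp_eq[simp]: assumes "a \<in> Gp" "b \<in> Gm" shows "bp (b \<otimes> a) = a"
  unfolding bplus_def
proof (rule the_equality)
  show "a \<in> Gp \<and> (\<exists>b'\<in>Gm. b \<otimes> a = b' \<otimes> a)" using assms by blast
  fix x assume "x \<in> Gp \<and> (\<exists>b'\<in>Gm. b \<otimes> a = b' \<otimes> x)"
  then obtain b' where "x \<in> Gp" "b' \<in> Gm" "b \<otimes> a = b' \<otimes> x" by blast
  then show "x = a" using bfact_uniq[of a b x b'] assms by simp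
qed
lemma bm_eq[simp]: assumes "a \<in> Gp" "b \<in> Gm" shows "bm (b \<otimes> a) = b"
  unfolding bminus_def
proof (rule the_equality)
  show "b \<in> Gm \<and> (\<exists>a'\<in>Gp. b \<otimes> a = b \<otimes> a')" using assms by blast
  fix x assume "x \<in> Gm \<and> (\<exists>a'\<in>Gp. b \<otimes> a = x \<otimes> a')"
  then obtain a' where "x \<in> Gm" "a' \<in> Gp" "b \<otimes> a = x \<otimes> a'" by blast
  then show "x = b" using bfact_uniq[of a b a' x] assms by simp
qed

lemma fp_in[simp]: "g \<in> carrier G \<Longrightarrow> fp g \<in> Gp" using fact_ex by force
lemma fm_in[simp]: "g \<in> carrier G \<Longrightarrow> fm g \<in> Gm" using fact_ex by force
lemma bp_in[simp]: "g \<in> carrier G \<Longrightarrow> bp g \<in> Gp" using bfact_ex by force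
lemma bm_in[simp]: "g \<in> carrier G \<Longrightarrow> bm g \<in> Gm" using bfact_ex by force
lemma fpm: "g \<in> carrier G \<Longrightarrow> fp g \<otimes> fm g = g" using fact_ex by force
lemma bmp: "g \<in> carrier G \<Longrightarrow> bm g \<otimes> bp g = g" using bfact_ex by force

lemma fp_p[simp]: "a \<in> Gp \<Longrightarrow> fp a = a" using fp_eq[of a \<one>] by simp
lemma fm_p[simp]: "a \<in> Gp \<Longrightarrow> fm a = \<one>" using fm_eq[of a \<one>] by simp
lemma bp_p[simp]: "a \<in> Gp \<Longrightarrow> bp a = a" using bp_eq[of a \<one>] by simp
lemma bm_p[simp]: "a \<in> Gp \<Longrightarrow> bm a = \<one>" using bm_eq[of a \<one>] by simp
lemma fp_m[simp]: "b \<in> Gm \<Longrightarrow> fp b = \<one>" using fp_eq[of \<one> b] by simp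
lemma fm_m[simp]: "b \<in> Gm \<Longrightarrow> fm b = b" using fm_eq[of \<one> b] by simp
lemma bp_m[simp]: "b \<in> Gm \<Longrightarrow> bp b = \<one>" using bp_eq[of \<one> b] by simp
lemma bm_m[simp]: "b \<in> Gm \<Longrightarrow> bm b = b" using bm_eq[of \<one> b] by simp

lemma fact_iff: "a \<in> Gp \<Longrightarrow> b \<in> Gm \<Longrightarrow> (g = a \<otimes> b) \<longleftrightarrow> (g \<in> carrier G \<and> fp g = a \<and> fm g = b)"
  using fpm by auto


abbreviation "lpm \<equiv> lact_pm G Gp Gm"
abbreviation "rpm \<equiv> ract_pm G Gp Gm"
abbreviation "lmp \<equiv> lact_mp G Gp Gm"
abbreviation "rmp \<equiv> ract_mp G Gp Gm"

lemma lpm_in[simp]: "u \<in> Gp \<Longrightarrow> m \<in> Gm \<Longrightarrow> lpm u m \<in> Gm" unfolding lact_pm_def by simp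
lemma rpm_in[simp]: "u \<in> Gp \<Longrightarrow> m \<in> Gm \<Longrightarrow> rpm u m \<in> Gp" unfolding ract_pm_def by simp
lemma lmp_in[simp]: "u \<in> Gp \<Longrightarrow> m \<in> Gm \<Longrightarrow> lmp m u \<in> Gp" unfolding lact_mp_def by simp
lemma rmp_in[simp]: "u \<in> Gp \<Longrightarrow> m \<in> Gm \<Longrightarrow> rmp m u \<in> Gm" unfolding ract_mp_def by simp
lemma pm_split: "u \<in> Gp \<Longrightarrow> m \<in> Gm \<Longrightarrow> u \<otimes> m = lpm u m \<otimes> rpm u m"
  unfolding lact_pm_def ract_pm_def by (simp add: bmp)
lemma mp_split: "u \<in> Gp \<Longrightarrow> m \<in> Gm \<Longrightarrow> m \<otimes> u = lmp m u \<otimes> rmp m u"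
  unfolding lact_mp_def ract_mp_def by (simp add: fpm)

lemma swap1: assumes "x \<in> carrier G" "y \<in> carrier G" "z \<in> carrier G" "w \<in> carrier G"
  "x \<otimes> y = z \<otimes> w" shows "y \<otimes> inv w = inv x \<otimes> z"
proof -
  have "y \<otimes> inv w = inv x \<otimes> (x \<otimes> y) \<otimes> inv w" using assms(1-4) by (simp add: m_assoc[symmetric])
  also have "\<dots> = inv x \<otimes> (z \<otimes> w) \<otimes> inv w" by (simp only: assms(5))
  also have "\<dots> = inv x \<otimes> z" using assms by (simp add: m_assoc)
  finally show ?thesis .
qed
lemma swap2: assumes "x \<in> carrier G" "y \<in> carrier G" "z \<in> carrier G" "w \<in> carrier G"
  "x \<otimes> y = z \<otimes> w" shows "inv z \<otimes> x = w \<otimes> inv y"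
proof -
  have "inv z \<otimes> x = inv z \<otimes> (x \<otimes> y) \<otimes> inv y" using assms(1-4) by (simp add: m_assoc)
  also have "\<dots> = inv z \<otimes> (z \<otimes> w) \<otimes> inv y" by (simp only: assms(5))
  also have "\<dots> = w \<otimes> inv y" using assms by (simp add: m_assoc[symmetric])
  finally show ?thesis .
qed

lemma I1: assumes "n \<in> Gm" "v \<in> Gp" shows "lpm v (inv (rmp n v)) = inv n"
proof -
  have "v \<otimes> inv (rmp n v) = inv n \<otimes> lmp n v"
    using swap1[OF _ _ _ _ mp_split[OF assms(2,1)]] assms by simp
  then show ?thesis unfolding lact_pm_def using assms by simp
qed

lemma I6: assumes "n \<in> Gm" "k \<in> Gm" "v \<in> Gp" "lpm v n = inv k" shows "n = inv (rmp k v)"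
proof -
  have "v \<otimes> n = inv k \<otimes> rpm v n" using pm_split[OF assms(3,1)] assms(4) by simp
  then have "inv (inv k) \<otimes> v = rpm v n \<otimes> inv n" using swap2[of v n "inv k" "rpm v n"] assms by simp
  then have "k \<otimes> v = rpm v n \<otimes> inv n" using assms by simp
  then have "rmp k v = inv n" unfolding ract_mp_def using assms by simp
  then show ?thesis using assms by simp
qed

lemma I3: assumes "m \<in> Gm" "u \<in> Gp" shows "rpm u (inv (rmp m u)) = lmp m u"
proof -
  have "u \<otimes> inv (rmp m u) = inv m \<otimes> lmp m u"
    using swap1[OF _ _ _ _ mp_split[OF assms(2,1)]] assms by simp
  then show ?thesis unfolding ract_pm_def using assms by simp
qed

lemma I2: assumes "n \<in> Gm" "u \<in> Gp" "v \<in> Gp" shows "rmp n (u \<otimes> v) = rmp (rmp n u) v"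
proof -
  have e1: "n \<otimes> u = lmp n u \<otimes> rmp n u" using mp_split assms by simp
  have e2: "rmp n u \<otimes> v = lmp (rmp n u) v \<otimes> rmp (rmp n u) v" using mp_split assms by simp
  have "n \<otimes> (u \<otimes> v) = (n \<otimes> u) \<otimes> v" using assms by (simp add: m_assoc)
  also have "\<dots> = (lmp n u \<otimes> rmp n u) \<otimes> v" by (simp only: e1)
  also have "\<dots> = lmp n u \<otimes> (rmp n u \<otimes> v)" using assms by (simp add: m_assoc)
  also have "\<dots> = lmp n u \<otimes> (lmp (rmp n u) v \<otimes> rmp (rmp n u) v)" by (simp only: e2)
  also have "\<dots> = (lmp n u \<otimes> lmp (rmp n u) v) \<otimes> rmp (rmp n u) v"
    using assms by (simp add: m_assoc)
  finally have "n \<otimes> (u \<otimes> v) = (lmp n u \<otimes> lmp (rmp n u) v) \<otimes> rmp (rmp n u) v" .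
  then show ?thesis unfolding ract_mp_def[of G Gp Gm n] using assms
    by (simp add: ract_mp_def)
qed

lemma I4: assumes "m \<in> Gm" "n \<in> Gm" "u \<in> Gp" shows "rmp (m \<otimes> n) u = rmp m (lmp n u) \<otimes> rmp n u"
proof -
  have e1: "n \<otimes> u = lmp n u \<otimes> rmp n u" using mp_split assms by simp
  have e2: "m \<otimes> lmp n u = lmp m (lmp n u) \<otimes> rmp m (lmp n u)" using mp_split assms by simp
  have "(m \<otimes> n) \<otimes> u = m \<otimes> (n \<otimes> u)" using assms by (simp add: m_assoc)
  also have "\<dots> = m \<otimes> (lmp n u \<otimes> rmp n u)" by (simp only: e1)
  also have "\<dots> = (m \<otimes> lmp n u) \<otimes> rmp n u" using assms by (simp add: m_assoc)
  also have "\<dots> = (lmp m (lmp n u) \<otimes> rmp m (lmp n u)) \<otimes> rmp n u" by (simp only: e2)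
  also have "\<dots> = lmp m (lmp n u) \<otimes> (rmp m (lmp n u) \<otimes> rmp n u)"
    using assms by (simp add: m_assoc)
  finally have "(m \<otimes> n) \<otimes> u = lmp m (lmp n u) \<otimes> (rmp m (lmp n u) \<otimes> rmp n u)" .
  then show ?thesis unfolding ract_mp_def[of G Gp Gm "m \<otimes> n"] using assms
    by (simp add: ract_mp_def)
qed

lemma I5[simp]: "m \<in> Gm \<Longrightarrow> rpm \<one> m = \<one>" unfolding ract_pm_def by simp

lemma rpm_bp: "g \<in> carrier G \<Longrightarrow> rpm (fp g) (fm g) = bp g" unfolding ract_pm_def by (simp add: fpm)


abbreviation "S2 \<equiv> sec2 G Gp Gm"
abbreviation "S3 \<equiv> sec3 G Gp Gm"

lemma fact_eq_iff: "g \<in> carrier G \<Longrightarrow> m \<in> Gm \<Longrightarrow> g = fp g \<otimes> m \<longleftrightarrow> fm g = m"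
  using fpm[of g] by (metis fm_eq fp_in)

lemma sec2_sum:
  assumes AB: "\<And>u v. u \<in> Gp \<Longrightarrow> v \<in> Gp \<Longrightarrow> A u v \<in> Gm" "\<And>u v. u \<in> Gp \<Longrightarrow> v \<in> Gp \<Longrightarrow> B u v \<in> Gm"
  shows "(\<Sum>u\<in>Gp. \<Sum>v\<in>Gp. t u v * (if a = u \<otimes> A u v \<and> b = v \<otimes> B u v then 1 else 0)) = S2 t A B a b"
proof (cases "a \<in> carrier G \<and> b \<in> carrier G")
  case True
  have "(\<Sum>u\<in>Gp. \<Sum>v\<in>Gp. t u v * (if a = u \<otimes> A u v \<and> b = v \<otimes> B u v then 1 else 0))
     = (if fp a \<in> Gp \<and> fp b \<in> Gp then t (fp a) (fp b) * (if a = fp a \<otimes> A (fp a) (fp b) \<and> b = fp b \<otimes> B (fp a) (fp b) then 1 else 0) else 0)"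
    using finGp finGp
  proof (rule sum2)
    fix u v assume uv: "u \<in> Gp" "v \<in> Gp"
      and nz: "t u v * (if a = u \<otimes> A u v \<and> b = v \<otimes> B u v then 1 else 0) \<noteq> 0"
    then have "a = u \<otimes> A u v" "b = v \<otimes> B u v" by (auto split: if_splits)
    then show "u = fp a \<and> v = fp b" using uv AB by simp
  qed
  also have "\<dots> = S2 t A B a b" unfolding sec2_def using True AB by (simp add: fact_eq_iff)
  finally show ?thesis .
next
  case False
  have "(\<Sum>u\<in>Gp. \<Sum>v\<in>Gp. t u v * (if a = u \<otimes> A u v \<and> b = v \<otimes> B u v then 1 else 0)) = 0"
    using False AB by (intro sum.neutral ballI) auto
  moreover have "S2 t A B a b = 0" unfolding sec2_def using False by auto
  ultimately show ?thesis by simp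
qed

end


context UF begin

lemma gm_split: "g \<in> carrier G \<Longrightarrow> m \<in> Gm \<Longrightarrow> g \<otimes> m = fp g \<otimes> (fm g \<otimes> m)"
proof -
  assume a: "g \<in> carrier G" "m \<in> Gm"
  have "fp g \<otimes> (fm g \<otimes> m) = (fp g \<otimes> fm g) \<otimes> m" using a by (simp add: m_assoc)
  also have "\<dots> = g \<otimes> m" using fpm[OF a(1)] by simp
  finally show ?thesis by simp
qed
lemma fp_mult[simp]: "g \<in> carrier G \<Longrightarrow> m \<in> Gm \<Longrightarrow> fp (g \<otimes> m) = fp g"
  using gm_split[of g m] by simp
lemma fm_mult[simp]: "g \<in> carrier G \<Longrightarrow> m \<in> Gm \<Longrightarrow> fm (g \<otimes> m) = fm g \<otimes> m"
  using gm_split[of g m] by simp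

lemma delta_sec:
  assumes AB: "\<And>u v. u \<in> Gp \<Longrightarrow> v \<in> Gp \<Longrightarrow> A u v \<in> Gm" "\<And>u v. u \<in> Gp \<Longrightarrow> v \<in> Gp \<Longrightarrow> B u v \<in> Gm"
  shows "delta_id G Gp Gm (S2 t A B) a b c =
    S3 (\<lambda>x v w. t (x \<otimes> v) w) (\<lambda>x v w. lpm v (A (x \<otimes> v) w)) (\<lambda>x v w. A (x \<otimes> v) w) (\<lambda>x v w. B (x \<otimes> v) w) a b c"
proof -
  define F where "F g g' h = S2 t A B g g' * (if a = fp g \<otimes> inv h \<otimes> lpm h (fm g) \<and> b = h \<otimes> fm g then 1 else 0)
     * (if c = g' then 1 else 0)" for g g' h
  have "delta_id G Gp Gm (S2 t A B) a b c = (\<Sum>g\<in>carrier G. \<Sum>g'\<in>carrier G. \<Sum>h\<in>Gp. F g g' h)"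
    unfolding delta_id_def dc_def F_def by (simp only: sum_distrib_left sum_distrib_right)
  also have "\<dots> = S3 (\<lambda>x v w. t (x \<otimes> v) w) (\<lambda>x v w. lpm v (A (x \<otimes> v) w)) (\<lambda>x v w. A (x \<otimes> v) w) (\<lambda>x v w. B (x \<otimes> v) w) a b c"
  proof (cases "a \<in> carrier G \<and> b \<in> carrier G \<and> c \<in> carrier G")
    case True
    then have abc: "a \<in> carrier G" "b \<in> carrier G" "c \<in> carrier G" by auto
    define x0 where "x0 = (fp a \<otimes> fp b) \<otimes> fm b"
    have x0c: "x0 \<in> carrier G" unfolding x0_def using abc by simp
    have fpx0: "fp x0 = fp a \<otimes> fp b" and fmx0: "fm x0 = fm b" unfolding x0_def using abc by simp_all
    have "(\<Sum>g\<in>carrier G. \<Sum>g'\<in>carrier G. \<Sum>h\<in>Gp. F g g' h) =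
        (if x0 \<in> carrier G \<and> c \<in> carrier G \<and> fp b \<in> Gp then F x0 c (fp b) else 0)"
      using fin fin finGp
    proof (rule sum3)
      fix g g' h assume gc: "g \<in> carrier G" "g' \<in> carrier G" "h \<in> Gp" and nz: "F g g' h \<noteq> 0"
      then have e: "a = fp g \<otimes> inv h \<otimes> lpm h (fm g)" "b = h \<otimes> fm g" "c = g'"
        unfolding F_def by (auto split: if_splits)
      have fb: "fp b = h" "fm b = fm g" using e gc by simp_all
      have "fp a = fp g \<otimes> inv h" using e gc by simp
      then have "fp a \<otimes> h = fp g" using gc by (simp add: m_assoc)
      then have "g = x0" unfolding x0_def using fb fpm[of g] gc by simp
      then show "g = x0 \<and> g' = c \<and> h = fp b" using e fb by simp
    qed
    also have "\<dots> = F x0 c (fp b)" using x0c abc by simp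
    also have "\<dots> = S3 (\<lambda>x v w. t (x \<otimes> v) w) (\<lambda>x v w. lpm v (A (x \<otimes> v) w)) (\<lambda>x v w. A (x \<otimes> v) w) (\<lambda>x v w. B (x \<otimes> v) w) a b c"
    proof -
      have "fp a \<otimes> fp b \<otimes> inv (fp b) = fp a" using abc by (simp add: m_assoc)
      then have c1: "(a = fp x0 \<otimes> inv (fp b) \<otimes> lpm (fp b) (fm x0)) \<longleftrightarrow> fm a = lpm (fp b) (fm b)"
        using fpx0 fmx0 abc fact_eq_iff[of a "lpm (fp b) (fm b)"] by simp
      have c2: "b = fp b \<otimes> fm x0" using fmx0 abc fpm by simp
      show ?thesis unfolding F_def sec2_def sec3_def using c1 c2 fpx0 fmx0 x0c abc by auto
    qed
    finally show ?thesis .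
  next
    case False
    have "(\<Sum>g\<in>carrier G. \<Sum>g'\<in>carrier G. \<Sum>h\<in>Gp. F g g' h) = 0"
    proof (intro sum.neutral ballI)
      fix g g' h assume gc: "g \<in> carrier G" "g' \<in> carrier G" "h \<in> Gp"
      show "F g g' h = 0"
      proof (rule ccontr)
        assume "F g g' h \<noteq> 0"
        then have e: "a = fp g \<otimes> inv h \<otimes> lpm h (fm g)" "b = h \<otimes> fm g" "c = g'"
          unfolding F_def by (auto split: if_splits)
        then show False using False gc by simp
      qed
    qed
    moreover have "S3 (\<lambda>x v w. t (x \<otimes> v) w) (\<lambda>x v w. lpm v (A (x \<otimes> v) w)) (\<lambda>x v w. A (x \<otimes> v) w) (\<lambda>x v w. B (x \<otimes> v) w) a b c = 0"
      unfolding sec3_def using False by auto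
    ultimately show ?thesis by simp
  qed
  finally show ?thesis .
qed


lemma rpm_one[simp]: "u \<in> Gp \<Longrightarrow> rpm u \<one> = u" unfolding ract_pm_def by simp

lemma hmc_eq: "g \<in> carrier G \<Longrightarrow> hmc G Gp Gm g h k = (if bp g = fp h \<and> k = g \<otimes> fm h then 1 else 0)"
  unfolding hmc_def by (simp add: rpm_bp)

lemma m1323_sec:
  assumes AB: "\<And>u v. u \<in> Gp \<Longrightarrow> v \<in> Gp \<Longrightarrow> A u v \<in> Gm" "\<And>u v. u \<in> Gp \<Longrightarrow> v \<in> Gp \<Longrightarrow> B u v \<in> Gm"
  shows "mult3 G Gp Gm (leg13 Gp (S2 t A B)) (leg23 Gp (S2 t A B)) a b c =
    S3 (\<lambda>u v w. t u w * t v (rpm w (B u w))) (\<lambda>u v w. A u w) (\<lambda>u v w. A v (rpm w (B u w)))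
       (\<lambda>u v w. B u w \<otimes> B v (rpm w (B u w))) a b c" (is "?L = ?R")
proof -
  define F where "F g1 g2 g3 h1 h2 h3 = leg13 Gp (S2 t A B) g1 g2 g3 * leg23 Gp (S2 t A B) h1 h2 h3 *
     hmc G Gp Gm g1 h1 a * hmc G Gp Gm g2 h2 b * hmc G Gp Gm g3 h3 c" for g1 g2 g3 h1 h2 h3
  have L: "?L = (\<Sum>g1\<in>carrier G. \<Sum>g2\<in>carrier G. \<Sum>g3\<in>carrier G. \<Sum>h1\<in>carrier G. \<Sum>h2\<in>carrier G. \<Sum>h3\<in>carrier G.
      F g1 g2 g3 h1 h2 h3)" unfolding mult3_def F_def by simp
  have nzD: "a = g1 \<and> g2 = fp b \<and> h1 = bp a \<and> h2 = b \<and> g3 = fp c \<otimes> B (fp a) (fp c) \<and>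
      h3 = rpm (fp c) (B (fp a) (fp c)) \<otimes> B (fp b) (rpm (fp c) (B (fp a) (fp c)))"
    if gc: "g1 \<in> carrier G" "g2 \<in> carrier G" "g3 \<in> carrier G" "h1 \<in> carrier G" "h2 \<in> carrier G" "h3 \<in> carrier G"
    and nz: "F g1 g2 g3 h1 h2 h3 \<noteq> 0" for g1 g2 g3 h1 h2 h3
  proof -
    have s1: "S2 t A B g1 g3 \<noteq> 0" and g2p: "g2 \<in> Gp" and h1p: "h1 \<in> Gp" and s2: "S2 t A B h2 h3 \<noteq> 0"
      and k1: "hmc G Gp Gm g1 h1 a \<noteq> 0" and k2: "hmc G Gp Gm g2 h2 b \<noteq> 0" and k3: "hmc G Gp Gm g3 h3 c \<noteq> 0"
      using nz unfolding F_def leg13_def leg23_def by (auto split: if_splits)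
    have e1: "fm g3 = B (fp g1) (fp g3)" using s1 unfolding sec2_def by (auto split: if_splits)
    have e2: "fm h3 = B (fp h2) (fp h3)" using s2 unfolding sec2_def by (auto split: if_splits)
    have k1': "bp g1 = h1" "a = g1" using k1 gc h1p unfolding hmc_eq[OF gc(1)] by (auto split: if_splits)
    have k2': "g2 = fp h2" "b = g2 \<otimes> fm h2" using k2 gc g2p unfolding hmc_eq[OF gc(2)] by (auto split: if_splits)
    have k3': "bp g3 = fp h3" "c = g3 \<otimes> fm h3" using k3 gc unfolding hmc_eq[OF gc(3)] by (auto split: if_splits)
    have fb: "fp b = g2" "h2 = b" using k2' gc g2p fpm[of h2] by simp_all
    have fc: "fp c = fp g3" using k3' gc by simp
    have g3e: "g3 = fp c \<otimes> B (fp a) (fp c)" using fc e1 k1' fpm[of g3] gc by simp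
    have h3e: "fp h3 = rpm (fp c) (B (fp a) (fp c))" using k3' g3e gc
      by (metis rpm_bp fc e1 k1'(2))
    have "h3 = fp h3 \<otimes> fm h3" using fpm[of h3] gc by simp
    then have "h3 = rpm (fp c) (B (fp a) (fp c)) \<otimes> B (fp b) (rpm (fp c) (B (fp a) (fp c)))"
      using h3e e2 fb by simp
    then show ?thesis using k1' fb g3e by simp
  qed
  show ?thesis
  proof (cases "a \<in> carrier G \<and> b \<in> carrier G \<and> c \<in> carrier G")
    case True
    then have abc: "a \<in> carrier G" "b \<in> carrier G" "c \<in> carrier G" by auto
    define w' where "w' = rpm (fp c) (B (fp a) (fp c))"
    define z0 where "z0 = fp c \<otimes> B (fp a) (fp c)"
    define r0 where "r0 = w' \<otimes> B (fp b) w'"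
    have w'p: "w' \<in> Gp" unfolding w'_def using abc AB by simp
    have Bac: "B (fp a) (fp c) \<in> Gm" "B (fp b) w' \<in> Gm" using abc AB w'p by simp_all
    have z0c: "z0 \<in> carrier G" "fp z0 = fp c" "fm z0 = B (fp a) (fp c)" unfolding z0_def using abc Bac by simp_all
    have r0c: "r0 \<in> carrier G" "fp r0 = w'" "fm r0 = B (fp b) w'" unfolding r0_def using w'p Bac by simp_all
    have "?L = (if a \<in> carrier G \<and> fp b \<in> carrier G \<and> z0 \<in> carrier G \<and> bp a \<in> carrier G \<and> b \<in> carrier G \<and> r0 \<in> carrier G
        then F a (fp b) z0 (bp a) b r0 else 0)"
      unfolding L using fin fin fin fin fin fin
    proof (rule sum6)
      fix g1 g2 g3 h1 h2 h3 assume "g1 \<in> carrier G" "g2 \<in> carrier G" "g3 \<in> carrier G" "h1 \<in> carrier G" "h2 \<in> carrier G" "h3 \<in> carrier G"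
        "F g1 g2 g3 h1 h2 h3 \<noteq> 0"
      from nzD[OF this] show "g1 = a \<and> g2 = fp b \<and> g3 = z0 \<and> h1 = bp a \<and> h2 = b \<and> h3 = r0"
        unfolding z0_def r0_def w'_def by simp
    qed
    also have "\<dots> = F a (fp b) z0 (bp a) b r0" using abc z0c r0c by simp
    also have "\<dots> = ?R"
    proof -
      have h1: "hmc G Gp Gm a (bp a) a = 1" using abc by (simp add: hmc_eq)
      have h2: "hmc G Gp Gm (fp b) b b = 1" using abc by (simp add: hmc_eq fpm)
      have h3: "hmc G Gp Gm z0 r0 c = (if fm c = B (fp a) (fp c) \<otimes> B (fp b) w' then 1 else 0)"
      proof -
        have "bp z0 = fp r0" using z0c r0c abc Bac unfolding w'_def by (simp add: rpm_bp[symmetric])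
        moreover have "(c = z0 \<otimes> fm r0) \<longleftrightarrow> fm c = B (fp a) (fp c) \<otimes> B (fp b) w'"
        proof -
          have "z0 \<otimes> fm r0 = fp c \<otimes> (B (fp a) (fp c) \<otimes> B (fp b) w')"
            unfolding z0_def using r0c abc Bac by (simp add: m_assoc)
          then show ?thesis using fact_eq_iff[of c] abc Bac by simp
        qed
        ultimately show ?thesis using z0c by (simp add: hmc_eq)
      qed
      have s1: "S2 t A B a z0 = (if fm a = A (fp a) (fp c) then t (fp a) (fp c) else 0)"
        unfolding sec2_def using z0c abc by simp
      have s2: "S2 t A B b r0 = (if fm b = A (fp b) w' then t (fp b) w' else 0)"
        unfolding sec2_def using r0c abc by simp
      have "F a (fp b) z0 (bp a) b r0 = S2 t A B a z0 * S2 t A B b r0 * hmc G Gp Gm z0 r0 c"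
        unfolding F_def leg13_def leg23_def using h1 h2 abc by simp
      also have "\<dots> = ?R" unfolding s1 s2 h3 sec3_def w'_def using abc by simp
      finally show ?thesis .
    qed
    finally show ?thesis .
  next
    case False
    have "?L = 0" unfolding L
    proof (intro sum.neutral ballI)
      fix g1 g2 g3 h1 h2 h3 assume gc: "g1 \<in> carrier G" "g2 \<in> carrier G" "g3 \<in> carrier G" "h1 \<in> carrier G" "h2 \<in> carrier G" "h3 \<in> carrier G"
      show "F g1 g2 g3 h1 h2 h3 = 0"
      proof (rule ccontr)
        assume nz: "F g1 g2 g3 h1 h2 h3 \<noteq> 0"
        have "hmc G Gp Gm g3 h3 c \<noteq> 0" using nz unfolding F_def by auto
        then have "c = g3 \<otimes> fm h3" using gc unfolding hmc_eq[OF gc(3)] by (auto split: if_splits)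
        then have "c \<in> carrier G" using gc by simp
        then show False using nzD[OF gc nz] False gc by auto
      qed
    qed
    moreover have "?R = 0" unfolding sec3_def using False by auto
    ultimately show ?thesis by simp
  qed
qed


lemma iddelta_sec:
  assumes AB: "\<And>u v. u \<in> Gp \<Longrightarrow> v \<in> Gp \<Longrightarrow> A u v \<in> Gm" "\<And>u v. u \<in> Gp \<Longrightarrow> v \<in> Gp \<Longrightarrow> B u v \<in> Gm"
  shows "id_delta G Gp Gm (S2 t A B) a b c =
    S3 (\<lambda>u y v. t u (y \<otimes> v)) (\<lambda>u y v. A u (y \<otimes> v)) (\<lambda>u y v. lpm v (B u (y \<otimes> v))) (\<lambda>u y v. B u (y \<otimes> v)) a b c"
    (is "?L = ?R")
proof -
  define F where "F g' g h = S2 t A B g' g * (if a = g' then 1 else 0) *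
     (if b = fp g \<otimes> inv h \<otimes> lpm h (fm g) \<and> c = h \<otimes> fm g then 1 else 0)" for g' g h
  have L: "?L = (\<Sum>g'\<in>carrier G. \<Sum>g\<in>carrier G. \<Sum>h\<in>Gp. F g' g h)"
    unfolding id_delta_def dc_def F_def by (simp only: sum_distrib_left)
  show ?thesis
  proof (cases "a \<in> carrier G \<and> b \<in> carrier G \<and> c \<in> carrier G")
    case True
    then have abc: "a \<in> carrier G" "b \<in> carrier G" "c \<in> carrier G" by auto
    define x0 where "x0 = (fp b \<otimes> fp c) \<otimes> fm c"
    have x0c: "x0 \<in> carrier G" unfolding x0_def using abc by simp
    have fpx0: "fp x0 = fp b \<otimes> fp c" and fmx0: "fm x0 = fm c" unfolding x0_def using abc by simp_all
    have "?L = (if a \<in> carrier G \<and> x0 \<in> carrier G \<and> fp c \<in> Gp then F a x0 (fp c) else 0)"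
      unfolding L using fin fin finGp
    proof (rule sum3)
      fix g' g h assume gc: "g' \<in> carrier G" "g \<in> carrier G" "h \<in> Gp" and nz: "F g' g h \<noteq> 0"
      then have e: "b = fp g \<otimes> inv h \<otimes> lpm h (fm g)" "c = h \<otimes> fm g" "a = g'"
        unfolding F_def by (auto split: if_splits)
      have fb: "fp c = h" "fm c = fm g" using e gc by simp_all
      have "fp b = fp g \<otimes> inv h" using e gc by simp
      then have "fp b \<otimes> h = fp g" using gc by (simp add: m_assoc)
      then have "g = x0" unfolding x0_def using fb fpm[of g] gc by simp
      then show "g' = a \<and> g = x0 \<and> h = fp c" using e fb by simp
    qed
    also have "\<dots> = F a x0 (fp c)" using x0c abc by simp
    also have "\<dots> = ?R"
    proof -
      have "fp b \<otimes> fp c \<otimes> inv (fp c) = fp b" using abc by (simp add: m_assoc)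
      then have c1: "(b = fp x0 \<otimes> inv (fp c) \<otimes> lpm (fp c) (fm x0)) \<longleftrightarrow> fm b = lpm (fp c) (fm c)"
        using fpx0 fmx0 abc fact_eq_iff[of b "lpm (fp c) (fm c)"] by simp
      have c2: "c = fp c \<otimes> fm x0" using fmx0 abc fpm by simp
      show ?thesis unfolding F_def sec2_def sec3_def using c1 c2 fpx0 fmx0 x0c abc by auto
    qed
    finally show ?thesis .
  next
    case False
    have "?L = 0" unfolding L
    proof (intro sum.neutral ballI)
      fix g' g h assume gc: "g' \<in> carrier G" "g \<in> carrier G" "h \<in> Gp"
      show "F g' g h = 0"
      proof (rule ccontr)
        assume "F g' g h \<noteq> 0"
        then have e: "b = fp g \<otimes> inv h \<otimes> lpm h (fm g)" "c = h \<otimes> fm g" "a = g'"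
          unfolding F_def by (auto split: if_splits)
        then show False using False gc by simp
      qed
    qed
    moreover have "?R = 0" unfolding sec3_def using False by auto
    ultimately show ?thesis by simp
  qed
qed

lemma m1312_sec:
  assumes AB: "\<And>u v. u \<in> Gp \<Longrightarrow> v \<in> Gp \<Longrightarrow> A u v \<in> Gm" "\<And>u v. u \<in> Gp \<Longrightarrow> v \<in> Gp \<Longrightarrow> B u v \<in> Gm"
  shows "mult3 G Gp Gm (leg13 Gp (S2 t A B)) (leg12 Gp (S2 t A B)) a b c =
    S3 (\<lambda>u y v. t u v * t (rpm u (A u v)) y) (\<lambda>u y v. A u v \<otimes> A (rpm u (A u v)) y)
       (\<lambda>u y v. B (rpm u (A u v)) y) (\<lambda>u y v. B u v) a b c" (is "?L = ?R")
proof -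
  define F where "F g1 g2 g3 h1 h2 h3 = leg13 Gp (S2 t A B) g1 g2 g3 * leg12 Gp (S2 t A B) h1 h2 h3 *
     hmc G Gp Gm g1 h1 a * hmc G Gp Gm g2 h2 b * hmc G Gp Gm g3 h3 c" for g1 g2 g3 h1 h2 h3
  have L: "?L = (\<Sum>g1\<in>carrier G. \<Sum>g2\<in>carrier G. \<Sum>g3\<in>carrier G. \<Sum>h1\<in>carrier G. \<Sum>h2\<in>carrier G. \<Sum>h3\<in>carrier G.
      F g1 g2 g3 h1 h2 h3)" unfolding mult3_def F_def by simp
  have nzD: "g1 = fp a \<otimes> A (fp a) (fp c) \<and> g2 = fp b \<and> g3 = c \<and>
      h1 = rpm (fp a) (A (fp a) (fp c)) \<otimes> A (rpm (fp a) (A (fp a) (fp c))) (fp b) \<and> h2 = b \<and> h3 = bp c"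
    if gc: "g1 \<in> carrier G" "g2 \<in> carrier G" "g3 \<in> carrier G" "h1 \<in> carrier G" "h2 \<in> carrier G" "h3 \<in> carrier G"
    and nz: "F g1 g2 g3 h1 h2 h3 \<noteq> 0" for g1 g2 g3 h1 h2 h3
  proof -
    have s1: "S2 t A B g1 g3 \<noteq> 0" and g2p: "g2 \<in> Gp" and h3p: "h3 \<in> Gp" and s2: "S2 t A B h1 h2 \<noteq> 0"
      and k1: "hmc G Gp Gm g1 h1 a \<noteq> 0" and k2: "hmc G Gp Gm g2 h2 b \<noteq> 0" and k3: "hmc G Gp Gm g3 h3 c \<noteq> 0"
      using nz unfolding F_def leg13_def leg12_def by (auto split: if_splits)
    have e1: "fm g1 = A (fp g1) (fp g3)" using s1 unfolding sec2_def by (auto split: if_splits)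
    have e2: "fm h1 = A (fp h1) (fp h2)" using s2 unfolding sec2_def by (auto split: if_splits)
    have k3': "bp g3 = h3" "c = g3" using k3 gc h3p unfolding hmc_eq[OF gc(3)] by (auto split: if_splits)
    have k2': "g2 = fp h2" "b = g2 \<otimes> fm h2" using k2 gc g2p unfolding hmc_eq[OF gc(2)] by (auto split: if_splits)
    have k1': "bp g1 = fp h1" "a = g1 \<otimes> fm h1" using k1 gc unfolding hmc_eq[OF gc(1)] by (auto split: if_splits)
    have fb: "fp b = g2" "h2 = b" using k2' gc g2p fpm[of h2] by simp_all
    have fa: "fp a = fp g1" using k1' gc by simp
    have g1e: "g1 = fp a \<otimes> A (fp a) (fp c)" using fa e1 k3' fpm[of g1] gc by simp
    have h1e: "fp h1 = rpm (fp a) (A (fp a) (fp c))" using k1' gc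
      by (metis rpm_bp fa e1 k3'(2))
    have "h1 = fp h1 \<otimes> fm h1" using fpm[of h1] gc by simp
    then have "h1 = rpm (fp a) (A (fp a) (fp c)) \<otimes> A (rpm (fp a) (A (fp a) (fp c))) (fp b)"
      using h1e e2 fb by simp
    then show ?thesis using k3' fb g1e by simp
  qed
  show ?thesis
  proof (cases "a \<in> carrier G \<and> b \<in> carrier G \<and> c \<in> carrier G")
    case True
    then have abc: "a \<in> carrier G" "b \<in> carrier G" "c \<in> carrier G" by auto
    define u' where "u' = rpm (fp a) (A (fp a) (fp c))"
    define x0 where "x0 = fp a \<otimes> A (fp a) (fp c)"
    define p0 where "p0 = u' \<otimes> A u' (fp b)"
    have u'p: "u' \<in> Gp" unfolding u'_def using abc AB by simp
    have Aac: "A (fp a) (fp c) \<in> Gm" "A u' (fp b) \<in> Gm" using abc AB u'p by simp_all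
    have x0c: "x0 \<in> carrier G" "fp x0 = fp a" "fm x0 = A (fp a) (fp c)" unfolding x0_def using abc Aac by simp_all
    have p0c: "p0 \<in> carrier G" "fp p0 = u'" "fm p0 = A u' (fp b)" unfolding p0_def using u'p Aac by simp_all
    have "?L = (if x0 \<in> carrier G \<and> fp b \<in> carrier G \<and> c \<in> carrier G \<and> p0 \<in> carrier G \<and> b \<in> carrier G \<and> bp c \<in> carrier G
        then F x0 (fp b) c p0 b (bp c) else 0)"
      unfolding L using fin fin fin fin fin fin
    proof (rule sum6)
      fix g1 g2 g3 h1 h2 h3 assume "g1 \<in> carrier G" "g2 \<in> carrier G" "g3 \<in> carrier G" "h1 \<in> carrier G" "h2 \<in> carrier G" "h3 \<in> carrier G"
        "F g1 g2 g3 h1 h2 h3 \<noteq> 0"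
      from nzD[OF this] show "g1 = x0 \<and> g2 = fp b \<and> g3 = c \<and> h1 = p0 \<and> h2 = b \<and> h3 = bp c"
        unfolding x0_def p0_def u'_def by simp
    qed
    also have "\<dots> = F x0 (fp b) c p0 b (bp c)" using abc x0c p0c by simp
    also have "\<dots> = ?R"
    proof -
      have h3: "hmc G Gp Gm c (bp c) c = 1" using abc by (simp add: hmc_eq)
      have h2: "hmc G Gp Gm (fp b) b b = 1" using abc by (simp add: hmc_eq fpm)
      have h1: "hmc G Gp Gm x0 p0 a = (if fm a = A (fp a) (fp c) \<otimes> A u' (fp b) then 1 else 0)"
      proof -
        have "bp x0 = fp p0" using x0c p0c abc Aac unfolding u'_def by (simp add: rpm_bp[symmetric])
        moreover have "(a = x0 \<otimes> fm p0) \<longleftrightarrow> fm a = A (fp a) (fp c) \<otimes> A u' (fp b)"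
        proof -
          have "x0 \<otimes> fm p0 = fp a \<otimes> (A (fp a) (fp c) \<otimes> A u' (fp b))"
            unfolding x0_def using p0c abc Aac by (simp add: m_assoc)
          then show ?thesis using fact_eq_iff[of a] abc Aac by simp
        qed
        ultimately show ?thesis using x0c by (simp add: hmc_eq)
      qed
      have s1: "S2 t A B x0 c = (if fm c = B (fp a) (fp c) then t (fp a) (fp c) else 0)"
        unfolding sec2_def using x0c abc by simp
      have s2: "S2 t A B p0 b = (if fm b = B u' (fp b) then t u' (fp b) else 0)"
        unfolding sec2_def using p0c abc by simp
      have "F x0 (fp b) c p0 b (bp c) = S2 t A B x0 c * S2 t A B p0 b * hmc G Gp Gm x0 p0 a"
        unfolding F_def leg13_def leg12_def using h3 h2 abc by simp
      also have "\<dots> = ?R" unfolding s1 s2 h1 sec3_def u'_def using abc by simp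
      finally show ?thesis .
    qed
    finally show ?thesis .
  next
    case False
    have "?L = 0" unfolding L
    proof (intro sum.neutral ballI)
      fix g1 g2 g3 h1 h2 h3 assume gc: "g1 \<in> carrier G" "g2 \<in> carrier G" "g3 \<in> carrier G" "h1 \<in> carrier G" "h2 \<in> carrier G" "h3 \<in> carrier G"
      show "F g1 g2 g3 h1 h2 h3 = 0"
      proof (rule ccontr)
        assume nz: "F g1 g2 g3 h1 h2 h3 \<noteq> 0"
        have "hmc G Gp Gm g1 h1 a \<noteq> 0" using nz unfolding F_def by auto
        then have "a = g1 \<otimes> fm h1" using gc unfolding hmc_eq[OF gc(1)] by (auto split: if_splits)
        then have "a \<in> carrier G" using gc by simp
        then show False using nzD[OF gc nz] False gc by auto
      qed
    qed
    moreover have "?R = 0" unfolding sec3_def using False by auto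
    ultimately show ?thesis by simp
  qed
qed

end


context UF begin

lemma sec3_ext:
  assumes "\<And>x y z. x \<in> Gp \<Longrightarrow> y \<in> Gp \<Longrightarrow> z \<in> Gp \<Longrightarrow>
     T x y z = T' x y z \<and> A1 x y z = A1' x y z \<and> A2 x y z = A2' x y z \<and> A3 x y z = A3' x y z"
  shows "S3 T A1 A2 A3 = S3 T' A1' A2' A3'"
proof (intro ext)
  fix a b c
  show "S3 T A1 A2 A3 a b c = S3 T' A1' A2' A3' a b c"
  proof (cases "a \<in> carrier G \<and> b \<in> carrier G \<and> c \<in> carrier G")
    case True
    then have "T (fp a) (fp b) (fp c) = T' (fp a) (fp b) (fp c) \<and> A1 (fp a) (fp b) (fp c) = A1' (fp a) (fp b) (fp c)
      \<and> A2 (fp a) (fp b) (fp c) = A2' (fp a) (fp b) (fp c) \<and> A3 (fp a) (fp b) (fp c) = A3' (fp a) (fp b) (fp c)"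
      using assms by simp
    then have e: "T (fp a) (fp b) (fp c) = T' (fp a) (fp b) (fp c)" "A1 (fp a) (fp b) (fp c) = A1' (fp a) (fp b) (fp c)"
      "A2 (fp a) (fp b) (fp c) = A2' (fp a) (fp b) (fp c)" "A3 (fp a) (fp b) (fp c) = A3' (fp a) (fp b) (fp c)" by auto
    show ?thesis unfolding sec3_def e by (rule refl)
  next
    case False
    then have z: "\<not> (a \<in> carrier G \<and> b \<in> carrier G \<and> c \<in> carrier G \<and> P)" for P by blast
    show ?thesis unfolding sec3_def by (simp only: z if_False)
  qed
qed

lemma sec3_inj:
  assumes eq: "S3 T A1 A2 A3 = S3 T' A1' A2' A3'"
    and A: "\<And>x y z. x \<in> Gp \<Longrightarrow> y \<in> Gp \<Longrightarrow> z \<in> Gp \<Longrightarrow> A1 x y z \<in> Gm \<and> A2 x y z \<in> Gm \<and> A3 x y z \<in> Gm"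
    and pos: "\<And>x y z. x \<in> Gp \<Longrightarrow> y \<in> Gp \<Longrightarrow> z \<in> Gp \<Longrightarrow> T x y z \<noteq> 0"
    and xyz: "x \<in> Gp" "y \<in> Gp" "z \<in> Gp"
  shows "T x y z = T' x y z \<and> A1 x y z = A1' x y z \<and> A2 x y z = A2' x y z \<and> A3 x y z = A3' x y z"
proof -
  define a where "a = x \<otimes> A1 x y z"
  define b where "b = y \<otimes> A2 x y z"
  define c where "c = z \<otimes> A3 x y z"
  have m: "A1 x y z \<in> Gm" "A2 x y z \<in> Gm" "A3 x y z \<in> Gm" using A xyz by auto
  have abc: "a \<in> carrier G" "b \<in> carrier G" "c \<in> carrier G" "fp a = x" "fp b = y" "fp c = z"
    "fm a = A1 x y z" "fm b = A2 x y z" "fm c = A3 x y z"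
    unfolding a_def b_def c_def using m xyz by simp_all
  have l: "S3 T A1 A2 A3 a b c = T x y z" unfolding sec3_def using abc by simp
  then have "S3 T' A1' A2' A3' a b c \<noteq> 0" using eq pos xyz by simp
  then have "fm a = A1' x y z \<and> fm b = A2' x y z \<and> fm c = A3' x y z"
    unfolding sec3_def using abc by (auto split: if_splits)
  moreover have "S3 T' A1' A2' A3' a b c = T' x y z" unfolding sec3_def using abc calculation by simp
  ultimately show ?thesis using l eq abc by simp
qed

lemma hmc_nonneg: "0 \<le> hmc G Gp Gm g h k" unfolding hmc_def by simp

lemma mult2_ge:
  assumes P: "positive2 P" and Q: "positive2 Q"
    and c: "g1 \<in> carrier G" "g2 \<in> carrier G" "h1 \<in> carrier G" "h2 \<in> carrier G"
  shows "P g1 g2 * Q h1 h2 * hmc G Gp Gm g1 h1 a * hmc G Gp Gm g2 h2 b \<le> mult2 G Gp Gm P Q a b"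
proof -
  define F where "F x1 x2 x3 x4 = P x1 x2 * Q x3 x4 * hmc G Gp Gm x1 x3 a * hmc G Gp Gm x2 x4 b" for x1 x2 x3 x4
  have nn: "0 \<le> F x1 x2 x3 x4" for x1 x2 x3 x4
    unfolding F_def using P Q hmc_nonneg unfolding positive2_def by (intro mult_nonneg_nonneg) auto
  have "F g1 g2 h1 h2 \<le> (\<Sum>x4\<in>carrier G. F g1 g2 h1 x4)"
    by (rule member_le_sum) (use c fin nn in auto)
  also have "\<dots> \<le> (\<Sum>x3\<in>carrier G. \<Sum>x4\<in>carrier G. F g1 g2 x3 x4)"
    by (rule member_le_sum[where f = "\<lambda>x3. \<Sum>x4\<in>carrier G. F g1 g2 x3 x4"]) (use c fin nn in \<open>auto intro!: sum_nonneg\<close>)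
  also have "\<dots> \<le> (\<Sum>x2\<in>carrier G. \<Sum>x3\<in>carrier G. \<Sum>x4\<in>carrier G. F g1 x2 x3 x4)"
    by (rule member_le_sum[where f = "\<lambda>x2. \<Sum>x3\<in>carrier G. \<Sum>x4\<in>carrier G. F g1 x2 x3 x4"]) (use c fin nn in \<open>auto intro!: sum_nonneg\<close>)
  also have "\<dots> \<le> (\<Sum>x1\<in>carrier G. \<Sum>x2\<in>carrier G. \<Sum>x3\<in>carrier G. \<Sum>x4\<in>carrier G. F x1 x2 x3 x4)"
    by (rule member_le_sum[where f = "\<lambda>x1. \<Sum>x2\<in>carrier G. \<Sum>x3\<in>carrier G. \<Sum>x4\<in>carrier G. F x1 x2 x3 x4"]) (use c fin nn in \<open>auto intro!: sum_nonneg\<close>)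
  finally show ?thesis unfolding mult2_def F_def .
qed

lemma mult2_nz:
  assumes "mult2 G Gp Gm P Q a b \<noteq> 0"
  shows "\<exists>g1\<in>carrier G. \<exists>g2\<in>carrier G. \<exists>h1\<in>carrier G. \<exists>h2\<in>carrier G.
     P g1 g2 \<noteq> 0 \<and> Q h1 h2 \<noteq> 0 \<and> hmc G Gp Gm g1 h1 a \<noteq> 0 \<and> hmc G Gp Gm g2 h2 b \<noteq> 0"
proof -
  from assms[unfolded mult2_def] obtain g1 where g1: "g1 \<in> carrier G"
    "(\<Sum>g2\<in>carrier G. \<Sum>h1\<in>carrier G. \<Sum>h2\<in>carrier G. P g1 g2 * Q h1 h2 * hmc G Gp Gm g1 h1 a * hmc G Gp Gm g2 h2 b) \<noteq> 0"
    by (blast dest: sum_nz)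
  from g1(2) obtain g2 where g2: "g2 \<in> carrier G"
    "(\<Sum>h1\<in>carrier G. \<Sum>h2\<in>carrier G. P g1 g2 * Q h1 h2 * hmc G Gp Gm g1 h1 a * hmc G Gp Gm g2 h2 b) \<noteq> 0"
    by (blast dest: sum_nz)
  from g2(2) obtain h1 where h1: "h1 \<in> carrier G"
    "(\<Sum>h2\<in>carrier G. P g1 g2 * Q h1 h2 * hmc G Gp Gm g1 h1 a * hmc G Gp Gm g2 h2 b) \<noteq> 0"
    by (blast dest: sum_nz)
  from h1(2) obtain h2 where h2: "h2 \<in> carrier G"
    "P g1 g2 * Q h1 h2 * hmc G Gp Gm g1 h1 a * hmc G Gp Gm g2 h2 b \<noteq> 0"
    by (blast dest: sum_nz)
  show ?thesis using g1(1) g2(1) h1(1) h2 by auto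
qed

lemma hmc_nzD: "g \<in> carrier G \<Longrightarrow> hmc G Gp Gm g h k \<noteq> 0 \<Longrightarrow> bp g = fp h \<and> k = g \<otimes> fm h"
  by (simp add: hmc_eq split: if_splits)

lemma hmc_one: "g \<in> carrier G \<Longrightarrow> bp g = fp h \<Longrightarrow> hmc G Gp Gm g h (g \<otimes> fm h) = 1"
  by (simp add: hmc_eq)

text \<open>F1: composable supports multiply into G+ x G+.\<close>
lemma compose_Gp:
  assumes P: "positive2 P" and Q: "positive2 Q" and XY: "mult2 G Gp Gm P Q = one2 Gp"
    and c: "g1 \<in> carrier G" "g2 \<in> carrier G" "h1 \<in> carrier G" "h2 \<in> carrier G"
    and nz: "P g1 g2 \<noteq> 0" "Q h1 h2 \<noteq> 0" and comp: "bp g1 = fp h1" "bp g2 = fp h2"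
  shows "fm h1 = inv (fm g1) \<and> fm h2 = inv (fm g2)"
proof -
  have "P g1 g2 * Q h1 h2 * hmc G Gp Gm g1 h1 (g1 \<otimes> fm h1) * hmc G Gp Gm g2 h2 (g2 \<otimes> fm h2)
      \<le> mult2 G Gp Gm P Q (g1 \<otimes> fm h1) (g2 \<otimes> fm h2)" by (rule mult2_ge[OF P Q c])
  moreover have "P g1 g2 > 0" "Q h1 h2 > 0" using P Q nz unfolding positive2_def by (auto simp: less_le)
  ultimately have "0 < mult2 G Gp Gm P Q (g1 \<otimes> fm h1) (g2 \<otimes> fm h2)"
    using hmc_one[OF c(1) comp(1)] hmc_one[OF c(2) comp(2)] by (smt (verit) mult_pos_pos)
  then have "g1 \<otimes> fm h1 \<in> Gp" "g2 \<otimes> fm h2 \<in> Gp" using XY unfolding one2_def by (auto split: if_splits)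
  then have "fm (g1 \<otimes> fm h1) = \<one>" "fm (g2 \<otimes> fm h2) = \<one>" by simp_all
  then have "fm g1 \<otimes> fm h1 = \<one>" "fm g2 \<otimes> fm h2 = \<one>" using c by simp_all
  then show ?thesis using c by (metis fm_in Gm_c inv_equality inv_inv inv_closed group.inv_comm[OF group_axioms])
qed

lemma bp_inverse: "g \<in> carrier G \<Longrightarrow> bp (bp g \<otimes> inv (fm g)) = fp g"
proof -
  assume g: "g \<in> carrier G"
  have e: "bm g \<otimes> bp g = fp g \<otimes> fm g" using bmp[OF g] fpm[OF g] by simp
  have "bp g \<otimes> inv (fm g) = inv (bm g) \<otimes> fp g" by (rule swap1) (use g e in simp_all)
  then show ?thesis using g by simp
qed


lemma fact_eqI: "g \<in> carrier G \<Longrightarrow> h \<in> carrier G \<Longrightarrow> fp g = fp h \<Longrightarrow> fm g = fm h \<Longrightarrow> g = h"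
proof -
  assume a: "g \<in> carrier G" "h \<in> carrier G" "fp g = fp h" "fm g = fm h"
  have "g = fp g \<otimes> fm g" using fpm[OF a(1)] by simp
  also have "\<dots> = fp h \<otimes> fm h" using a(3,4) by simp
  also have "\<dots> = h" using fpm[OF a(2)] by simp
  finally show ?thesis .
qed

lemma bisection:
  assumes R: "R \<in> tens2 G" "positive2 R" and S: "S \<in> tens2 G" "positive2 S"
    and RS: "mult2 G Gp Gm R S = one2 Gp" and SR: "mult2 G Gp Gm S R = one2 Gp"
  shows "\<exists>t A B. (\<forall>u\<in>Gp. \<forall>v\<in>Gp. A u v \<in> Gm \<and> B u v \<in> Gm \<and> t u v > 0) \<and> R = S2 t A B"
proof -
  have suppR: "a \<in> carrier G \<and> b \<in> carrier G" if "R a b \<noteq> 0" for a b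
    using R(1) that unfolding tens2_def by blast
  define Q where "Q x y p \<longleftrightarrow> R (fst p) (snd p) \<noteq> 0 \<and> fp (fst p) = x \<and> fp (snd p) = y \<and>
     (\<forall>g1 g2. R g1 g2 \<noteq> 0 \<and> fp g1 = x \<and> fp g2 = y \<longrightarrow> g1 = fst p \<and> g2 = snd p)" for x y p
  have ex: "\<exists>p. Q x y p" if xy: "x \<in> Gp" "y \<in> Gp" for x y
  proof -
    have "mult2 G Gp Gm R S x y \<noteq> 0" using RS xy unfolding one2_def by simp
    from mult2_nz[OF this] obtain g1 g2 h1 h2 where c: "g1 \<in> carrier G" "g2 \<in> carrier G" "h1 \<in> carrier G" "h2 \<in> carrier G"
      and nz: "R g1 g2 \<noteq> 0" "S h1 h2 \<noteq> 0" and k: "hmc G Gp Gm g1 h1 x \<noteq> 0" "hmc G Gp Gm g2 h2 y \<noteq> 0"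
      by blast
    have k1: "bp g1 = fp h1" "x = g1 \<otimes> fm h1" using hmc_nzD[OF c(1) k(1)] by auto
    have k2: "bp g2 = fp h2" "y = g2 \<otimes> fm h2" using hmc_nzD[OF c(2) k(2)] by auto
    have fpg: "fp g1 = x" "fp g2 = y"
    proof -
      have "fp x = fp g1" using k1(2) fp_mult[of g1 "fm h1"] c by simp
      then show "fp g1 = x" using xy by simp
      have "fp y = fp g2" using k2(2) fp_mult[of g2 "fm h2"] c by simp
      then show "fp g2 = y" using xy by simp
    qed
    have inv1: "fm h1 = inv (fm g1) \<and> fm h2 = inv (fm g2)"
      by (rule compose_Gp[OF R(2) S(2) RS c nz k1(1) k2(1)])
    have bph: "bp h1 = x" "bp h2 = y"
    proof -
      have "h1 = bp g1 \<otimes> inv (fm g1)" using fpm[OF c(3)] k1 inv1 by simp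
      then show "bp h1 = x" using bp_inverse[OF c(1)] fpg by simp
      have "h2 = bp g2 \<otimes> inv (fm g2)" using fpm[OF c(4)] k2 inv1 by simp
      then show "bp h2 = y" using bp_inverse[OF c(2)] fpg by simp
    qed
    have uniq: "g1' = g1 \<and> g2' = g2" if "R g1' g2' \<noteq> 0" "fp g1' = x" "fp g2' = y" for g1' g2'
    proof -
      have c': "g1' \<in> carrier G" "g2' \<in> carrier G" using suppR that(1) by auto
      have "fm g1' = inv (fm h1) \<and> fm g2' = inv (fm h2)"
        using compose_Gp[OF S(2) R(2) SR c(3,4) c' nz(2) that(1)] bph that by simp
      then have "fm g1' = fm g1" "fm g2' = fm g2" using inv1 c by simp_all
      then show ?thesis using fact_eqI[OF c'(1) c(1)] fact_eqI[OF c'(2) c(2)] that fpg by simp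
    qed
    have "Q x y (g1, g2)" unfolding Q_def fst_conv snd_conv using nz(1) fpg uniq by blast
    then show ?thesis by blast
  qed
  define P where "P x y = (SOME p. Q x y p)" for x y
  have PQ: "Q x y (P x y)" if "x \<in> Gp" "y \<in> Gp" for x y
    unfolding P_def using ex[OF that] by (rule someI_ex)
  define t where "t x y = R (fst (P x y)) (snd (P x y))" for x y
  define A where "A x y = fm (fst (P x y))" for x y
  define B where "B x y = fm (snd (P x y))" for x y
  have props: "A u v \<in> Gm \<and> B u v \<in> Gm \<and> t u v > 0" if "u \<in> Gp" "v \<in> Gp" for u v
  proof -
    have q: "R (fst (P u v)) (snd (P u v)) \<noteq> 0" using PQ[OF that] unfolding Q_def by blast
    then have "fst (P u v) \<in> carrier G" "snd (P u v) \<in> carrier G" using suppR by auto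
    moreover have "R (fst (P u v)) (snd (P u v)) \<ge> 0" using R(2) unfolding positive2_def by blast
    ultimately show ?thesis unfolding A_def B_def t_def using q by simp
  qed
  have "R = S2 t A B"
  proof (intro ext)
    fix a b
    show "R a b = S2 t A B a b"
    proof (cases "R a b = 0")
      case False
      then have c: "a \<in> carrier G" "b \<in> carrier G" using suppR by auto
      have q: "Q (fp a) (fp b) (P (fp a) (fp b))" using PQ c by simp
      then have "a = fst (P (fp a) (fp b)) \<and> b = snd (P (fp a) (fp b))" unfolding Q_def using False by blast
      then show ?thesis unfolding sec2_def A_def B_def t_def using c by simp
    next
      case True
      show ?thesis
      proof (cases "a \<in> carrier G \<and> b \<in> carrier G \<and> fm a = A (fp a) (fp b) \<and> fm b = B (fp a) (fp b)")
        case True2: True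
        then have c: "a \<in> carrier G" "b \<in> carrier G" by auto
        have q: "Q (fp a) (fp b) (P (fp a) (fp b))" using PQ c by simp
        then have nz: "R (fst (P (fp a) (fp b))) (snd (P (fp a) (fp b))) \<noteq> 0" and
          fps: "fp (fst (P (fp a) (fp b))) = fp a" "fp (snd (P (fp a) (fp b))) = fp b" unfolding Q_def by auto
        then have cc: "fst (P (fp a) (fp b)) \<in> carrier G" "snd (P (fp a) (fp b)) \<in> carrier G" using suppR by auto
        have "a = fst (P (fp a) (fp b))" using fact_eqI[OF c(1) cc(1)] fps True2 unfolding A_def by simp
        moreover have "b = snd (P (fp a) (fp b))" using fact_eqI[OF c(2) cc(2)] fps True2 unfolding B_def by simp
        ultimately show ?thesis using nz True by simp
      next
        case False
        then show ?thesis unfolding sec2_def using True by auto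
      qed
    qed
  qed
  then show ?thesis using props by blast
qed

end


context UF begin

lemma hom_sub_iff: "f \<in> hom (G\<lparr>carrier := Gp\<rparr>) (G\<lparr>carrier := Gm\<rparr>) \<longleftrightarrow>
   (\<forall>u\<in>Gp. f u \<in> Gm) \<and> (\<forall>u\<in>Gp. \<forall>v\<in>Gp. f (u \<otimes> v) = f u \<otimes> f v)"
  unfolding hom_def by auto

lemma sec2_ext:
  assumes "\<And>u v. u \<in> Gp \<Longrightarrow> v \<in> Gp \<Longrightarrow> t u v = t' u v \<and> A u v = A' u v \<and> B u v = B' u v"
  shows "S2 t A B = S2 t' A' B'"
proof (intro ext)
  fix a b
  show "S2 t A B a b = S2 t' A' B' a b"
  proof (cases "a \<in> carrier G \<and> b \<in> carrier G")
    case True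
    then have e: "t (fp a) (fp b) = t' (fp a) (fp b)" "A (fp a) (fp b) = A' (fp a) (fp b)"
      "B (fp a) (fp b) = B' (fp a) (fp b)" using assms by auto
    show ?thesis unfolding sec2_def e by (rule refl)
  next
    case False
    then have z: "\<not> (a \<in> carrier G \<and> b \<in> carrier G \<and> P)" for P by blast
    show ?thesis unfolding sec2_def by (simp only: z if_False)
  qed
qed

lemma Rof_sec:
  assumes xi: "\<And>u. u \<in> Gp \<Longrightarrow> \<xi> u \<in> Gm" and eta: "\<And>u. u \<in> Gp \<Longrightarrow> \<eta> u \<in> Gm"
  shows "R_of G Gp Gm \<xi> \<eta> r = S2 r (\<lambda>u v. inv (rmp (\<eta> v) u)) (\<lambda>u v. \<xi> u)"
proof (intro ext)
  fix a b
  show "R_of G Gp Gm \<xi> \<eta> r a b = S2 r (\<lambda>u v. inv (rmp (\<eta> v) u)) (\<lambda>u v. \<xi> u) a b"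
    unfolding R_of_def
    using sec2_sum[of "\<lambda>u v. inv (rmp (\<eta> v) u)" "\<lambda>u v. \<xi> u" r a b] xi eta by simp
qed

lemma forward:
  assumes adm: "admissible_data G Gp Gm \<xi> \<eta> r"
  shows "delta_id G Gp Gm (R_of G Gp Gm \<xi> \<eta> r) = mult3 G Gp Gm (leg13 Gp (R_of G Gp Gm \<xi> \<eta> r)) (leg23 Gp (R_of G Gp Gm \<xi> \<eta> r)) \<and>
         id_delta G Gp Gm (R_of G Gp Gm \<xi> \<eta> r) = mult3 G Gp Gm (leg13 Gp (R_of G Gp Gm \<xi> \<eta> r)) (leg12 Gp (R_of G Gp Gm \<xi> \<eta> r))"
proof -
  have xi: "\<And>u. u \<in> Gp \<Longrightarrow> \<xi> u \<in> Gm" "\<And>u v. u \<in> Gp \<Longrightarrow> v \<in> Gp \<Longrightarrow> \<xi> (u \<otimes> v) = \<xi> u \<otimes> \<xi> v"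
    using adm unfolding admissible_data_def hom_sub_iff by auto
  have eta: "\<And>u. u \<in> Gp \<Longrightarrow> \<eta> u \<in> Gm" "\<And>u v. u \<in> Gp \<Longrightarrow> v \<in> Gp \<Longrightarrow> \<eta> (u \<otimes> v) = \<eta> u \<otimes> \<eta> v"
    using adm unfolding admissible_data_def hom_sub_iff by auto
  have id1: "\<And>u v. u \<in> Gp \<Longrightarrow> v \<in> Gp \<Longrightarrow> lpm v (\<xi> u) = \<xi> (lmp (\<eta> v) u)"
    and id2: "\<And>u v. u \<in> Gp \<Longrightarrow> v \<in> Gp \<Longrightarrow> rmp (\<eta> v) u = \<eta> (rpm v (\<xi> u))"
    and id3: "\<And>u v w. u \<in> Gp \<Longrightarrow> v \<in> Gp \<Longrightarrow> w \<in> Gp \<Longrightarrow> r (u \<otimes> w) v = r u v * r w (rpm v (\<xi> u))"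
    and id4: "\<And>u v w. u \<in> Gp \<Longrightarrow> v \<in> Gp \<Longrightarrow> w \<in> Gp \<Longrightarrow> r u (w \<otimes> v) = r u v * r (lmp (\<eta> v) u) w"
    using adm unfolding admissible_data_def by blast+
  define \<alpha> where "\<alpha> u v = inv (rmp (\<eta> v) u)" for u v
  define \<beta> where "\<beta> u v = \<xi> u" for u v :: 'a
  have AB: "\<And>u v. u \<in> Gp \<Longrightarrow> v \<in> Gp \<Longrightarrow> \<alpha> u v \<in> Gm" "\<And>u v. u \<in> Gp \<Longrightarrow> v \<in> Gp \<Longrightarrow> \<beta> u v \<in> Gm"
    unfolding \<alpha>_def \<beta>_def using xi eta by simp_all
  have R: "R_of G Gp Gm \<xi> \<eta> r = S2 r \<alpha> \<beta>" unfolding \<alpha>_def \<beta>_def using Rof_sec xi eta by simp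
  have e1: "delta_id G Gp Gm (S2 r \<alpha> \<beta>) = mult3 G Gp Gm (leg13 Gp (S2 r \<alpha> \<beta>)) (leg23 Gp (S2 r \<alpha> \<beta>))"
  proof -
    have "delta_id G Gp Gm (S2 r \<alpha> \<beta>) = S3 (\<lambda>x v w. r (x \<otimes> v) w) (\<lambda>x v w. lpm v (\<alpha> (x \<otimes> v) w)) (\<lambda>x v w. \<alpha> (x \<otimes> v) w) (\<lambda>x v w. \<beta> (x \<otimes> v) w)"
      using delta_sec[OF AB] by (intro ext) simp
    also have "\<dots> = S3 (\<lambda>u v w. r u w * r v (rpm w (\<beta> u w))) (\<lambda>u v w. \<alpha> u w) (\<lambda>u v w. \<alpha> v (rpm w (\<beta> u w)))
       (\<lambda>u v w. \<beta> u w \<otimes> \<beta> v (rpm w (\<beta> u w)))"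
    proof (rule sec3_ext)
      fix x v w assume p: "x \<in> Gp" "v \<in> Gp" "w \<in> Gp"
      have t: "r (x \<otimes> v) w = r x w * r v (rpm w (\<beta> x w))" unfolding \<beta>_def using id3 p by simp
      have i2: "rmp (\<eta> w) (x \<otimes> v) = rmp (rmp (\<eta> w) x) v" using I2 eta p by simp
      have a1: "lpm v (\<alpha> (x \<otimes> v) w) = \<alpha> x w" unfolding \<alpha>_def i2 using I1 eta p by simp
      have a2: "\<alpha> (x \<otimes> v) w = \<alpha> v (rpm w (\<beta> x w))" unfolding \<alpha>_def \<beta>_def i2 using id2 p by simp
      have a3: "\<beta> (x \<otimes> v) w = \<beta> x w \<otimes> \<beta> v (rpm w (\<beta> x w))" unfolding \<beta>_def using xi p by simp
      show "r (x \<otimes> v) w = r x w * r v (rpm w (\<beta> x w)) \<and> lpm v (\<alpha> (x \<otimes> v) w) = \<alpha> x w \<and>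
         \<alpha> (x \<otimes> v) w = \<alpha> v (rpm w (\<beta> x w)) \<and> \<beta> (x \<otimes> v) w = \<beta> x w \<otimes> \<beta> v (rpm w (\<beta> x w))"
        using t a1 a2 a3 by blast
    qed
    also have "\<dots> = mult3 G Gp Gm (leg13 Gp (S2 r \<alpha> \<beta>)) (leg23 Gp (S2 r \<alpha> \<beta>))"
      using m1323_sec[OF AB] by (intro ext) simp
    finally show ?thesis .
  qed
  have e2: "id_delta G Gp Gm (S2 r \<alpha> \<beta>) = mult3 G Gp Gm (leg13 Gp (S2 r \<alpha> \<beta>)) (leg12 Gp (S2 r \<alpha> \<beta>))"
  proof -
    have "id_delta G Gp Gm (S2 r \<alpha> \<beta>) = S3 (\<lambda>u y v. r u (y \<otimes> v)) (\<lambda>u y v. \<alpha> u (y \<otimes> v)) (\<lambda>u y v. lpm v (\<beta> u (y \<otimes> v))) (\<lambda>u y v. \<beta> u (y \<otimes> v))"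
      using iddelta_sec[OF AB] by (intro ext) simp
    also have "\<dots> = S3 (\<lambda>u y v. r u v * r (rpm u (\<alpha> u v)) y) (\<lambda>u y v. \<alpha> u v \<otimes> \<alpha> (rpm u (\<alpha> u v)) y)
       (\<lambda>u y v. \<beta> (rpm u (\<alpha> u v)) y) (\<lambda>u y v. \<beta> u v)"
    proof (rule sec3_ext)
      fix u y v assume p: "u \<in> Gp" "y \<in> Gp" "v \<in> Gp"
      have i3: "rpm u (\<alpha> u v) = lmp (\<eta> v) u" unfolding \<alpha>_def using I3 eta p by simp
      have t: "r u (y \<otimes> v) = r u v * r (rpm u (\<alpha> u v)) y" unfolding i3 using id4 p by simp
      have a1: "\<alpha> u (y \<otimes> v) = \<alpha> u v \<otimes> \<alpha> (rpm u (\<alpha> u v)) y"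
      proof -
        have "rmp (\<eta> (y \<otimes> v)) u = rmp (\<eta> y) (lmp (\<eta> v) u) \<otimes> rmp (\<eta> v) u"
          using eta p I4 by simp
        then show ?thesis unfolding i3 unfolding \<alpha>_def using eta p by (simp add: inv_mult_group)
      qed
      have a2: "lpm v (\<beta> u (y \<otimes> v)) = \<beta> (rpm u (\<alpha> u v)) y" unfolding i3 \<beta>_def using id1 p by simp
      show "r u (y \<otimes> v) = r u v * r (rpm u (\<alpha> u v)) y \<and> \<alpha> u (y \<otimes> v) = \<alpha> u v \<otimes> \<alpha> (rpm u (\<alpha> u v)) y \<and>
         lpm v (\<beta> u (y \<otimes> v)) = \<beta> (rpm u (\<alpha> u v)) y \<and> \<beta> u (y \<otimes> v) = \<beta> u v"
        using t a1 a2 unfolding \<beta>_def by blast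
    qed
    also have "\<dots> = mult3 G Gp Gm (leg13 Gp (S2 r \<alpha> \<beta>)) (leg12 Gp (S2 r \<alpha> \<beta>))"
      using m1312_sec[OF AB] by (intro ext) simp
    finally show ?thesis .
  qed
  show ?thesis unfolding R using e1 e2 by blast
qed


lemma converse:
  assumes R: "R \<in> tens2 G" "positive2 R"
    and inv: "\<exists>S \<in> tens2 G. mult2 G Gp Gm R S = one2 Gp \<and> mult2 G Gp Gm S R = one2 Gp \<and> positive2 S"
    and d1: "delta_id G Gp Gm R = mult3 G Gp Gm (leg13 Gp R) (leg23 Gp R)"
    and d2: "id_delta G Gp Gm R = mult3 G Gp Gm (leg13 Gp R) (leg12 Gp R)"
  shows "\<exists>\<xi> \<eta> r. admissible_data G Gp Gm \<xi> \<eta> r \<and> R = R_of G Gp Gm \<xi> \<eta> r"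
proof -
  obtain S where S: "S \<in> tens2 G" "mult2 G Gp Gm R S = one2 Gp" "mult2 G Gp Gm S R = one2 Gp" "positive2 S"
    using inv by blast
  obtain t A B where tAB: "\<forall>u\<in>Gp. \<forall>v\<in>Gp. A u v \<in> Gm \<and> B u v \<in> Gm \<and> t u v > 0" and RS: "R = S2 t A B"
    using bisection[OF R S(1) S(4) S(2) S(3)] by blast
  have AB: "\<And>u v. u \<in> Gp \<Longrightarrow> v \<in> Gp \<Longrightarrow> A u v \<in> Gm" "\<And>u v. u \<in> Gp \<Longrightarrow> v \<in> Gp \<Longrightarrow> B u v \<in> Gm"
    and tpos: "\<And>u v. u \<in> Gp \<Longrightarrow> v \<in> Gp \<Longrightarrow> t u v > 0" using tAB by auto
  have E1: "S3 (\<lambda>x v w. t (x \<otimes> v) w) (\<lambda>x v w. lpm v (A (x \<otimes> v) w)) (\<lambda>x v w. A (x \<otimes> v) w) (\<lambda>x v w. B (x \<otimes> v) w)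
    = S3 (\<lambda>u v w. t u w * t v (rpm w (B u w))) (\<lambda>u v w. A u w) (\<lambda>u v w. A v (rpm w (B u w)))
       (\<lambda>u v w. B u w \<otimes> B v (rpm w (B u w)))"
  proof (intro ext)
    fix a b c
    show "S3 (\<lambda>x v w. t (x \<otimes> v) w) (\<lambda>x v w. lpm v (A (x \<otimes> v) w)) (\<lambda>x v w. A (x \<otimes> v) w) (\<lambda>x v w. B (x \<otimes> v) w) a b c
    = S3 (\<lambda>u v w. t u w * t v (rpm w (B u w))) (\<lambda>u v w. A u w) (\<lambda>u v w. A v (rpm w (B u w)))
       (\<lambda>u v w. B u w \<otimes> B v (rpm w (B u w))) a b c"
    proof -
      have "delta_id G Gp Gm (S2 t A B) a b c = mult3 G Gp Gm (leg13 Gp (S2 t A B)) (leg23 Gp (S2 t A B)) a b c"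
        using d1 unfolding RS by simp
      then show ?thesis using delta_sec[OF AB, where t=t and a=a and b=b and c=c] m1323_sec[OF AB, where t=t and a=a and b=b and c=c] by simp
    qed
  qed
  have E2: "S3 (\<lambda>u y v. t u (y \<otimes> v)) (\<lambda>u y v. A u (y \<otimes> v)) (\<lambda>u y v. lpm v (B u (y \<otimes> v))) (\<lambda>u y v. B u (y \<otimes> v))
    = S3 (\<lambda>u y v. t u v * t (rpm u (A u v)) y) (\<lambda>u y v. A u v \<otimes> A (rpm u (A u v)) y)
       (\<lambda>u y v. B (rpm u (A u v)) y) (\<lambda>u y v. B u v)"
  proof (intro ext)
    fix a b c
    show "S3 (\<lambda>u y v. t u (y \<otimes> v)) (\<lambda>u y v. A u (y \<otimes> v)) (\<lambda>u y v. lpm v (B u (y \<otimes> v))) (\<lambda>u y v. B u (y \<otimes> v)) a b c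
    = S3 (\<lambda>u y v. t u v * t (rpm u (A u v)) y) (\<lambda>u y v. A u v \<otimes> A (rpm u (A u v)) y)
       (\<lambda>u y v. B (rpm u (A u v)) y) (\<lambda>u y v. B u v) a b c"
    proof -
      have "id_delta G Gp Gm (S2 t A B) a b c = mult3 G Gp Gm (leg13 Gp (S2 t A B)) (leg12 Gp (S2 t A B)) a b c"
        using d2 unfolding RS by simp
      then show ?thesis using iddelta_sec[OF AB, where t=t and a=a and b=b and c=c] m1312_sec[OF AB, where t=t and a=a and b=b and c=c] by simp
    qed
  qed
  have D: "t (x \<otimes> v) w = t x w * t v (rpm w (B x w)) \<and> lpm v (A (x \<otimes> v) w) = A x w \<and>
     A (x \<otimes> v) w = A v (rpm w (B x w)) \<and> B (x \<otimes> v) w = B x w \<otimes> B v (rpm w (B x w))"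
    if p: "x \<in> Gp" "v \<in> Gp" "w \<in> Gp" for x v w
    by (rule sec3_inj[OF E1 _ _ p]) (use AB tpos in \<open>auto simp: less_le\<close>)
  have E: "t u (y \<otimes> v) = t u v * t (rpm u (A u v)) y \<and> A u (y \<otimes> v) = A u v \<otimes> A (rpm u (A u v)) y \<and>
     lpm v (B u (y \<otimes> v)) = B (rpm u (A u v)) y \<and> B u (y \<otimes> v) = B u v"
    if p: "u \<in> Gp" "y \<in> Gp" "v \<in> Gp" for u y v
    by (rule sec3_inj[OF E2 _ _ p]) (use AB tpos in \<open>auto simp: less_le\<close>)
  define \<xi> where "\<xi> u = B u \<one>" for u
  define \<eta> where "\<eta> v = inv (A \<one> v)" for v
  have xiGm: "\<xi> u \<in> Gm" if "u \<in> Gp" for u unfolding \<xi>_def using AB that by simp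
  have etaGm: "\<eta> u \<in> Gm" if "u \<in> Gp" for u unfolding \<eta>_def using AB that by simp
  have Bxi: "B u w = \<xi> u" if "u \<in> Gp" "w \<in> Gp" for u w
  proof -
    have "B u (w \<otimes> \<one>) = B u \<one>" using E[OF that(1) that(2) Gp_one] by blast
    then show ?thesis using that unfolding \<xi>_def by simp
  qed
  have xihom: "\<xi> (u \<otimes> v) = \<xi> u \<otimes> \<xi> v" if "u \<in> Gp" "v \<in> Gp" for u v
  proof -
    have "B (u \<otimes> v) \<one> = B u \<one> \<otimes> B v (rpm \<one> (B u \<one>))" using D[OF that Gp_one] by blast
    then show ?thesis using that AB unfolding \<xi>_def by simp
  qed
  have etahom: "\<eta> (y \<otimes> v) = \<eta> y \<otimes> \<eta> v" if "y \<in> Gp" "v \<in> Gp" for y v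
  proof -
    have "A \<one> (y \<otimes> v) = A \<one> v \<otimes> A (rpm \<one> (A \<one> v)) y" using E[OF Gp_one that] by blast
    then have "A \<one> (y \<otimes> v) = A \<one> v \<otimes> A \<one> y" using that AB by simp
    then show ?thesis unfolding \<eta>_def using that AB by (simp add: inv_mult_group)
  qed
  have Aform: "A u v = inv (rmp (\<eta> v) u)" if "u \<in> Gp" "v \<in> Gp" for u v
  proof -
    have "lpm u (A (\<one> \<otimes> u) v) = A \<one> v" using D[OF Gp_one that] by blast
    then have "lpm u (A u v) = A \<one> v" using that by simp
    also have "\<dots> = inv (\<eta> v)" unfolding \<eta>_def using AB that by simp
    finally show ?thesis using I6[of "A u v" "\<eta> v" u] AB etaGm that by simp
  qed
  have I3': "rpm u (A u v) = lmp (\<eta> v) u" if "u \<in> Gp" "v \<in> Gp" for u v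
    using Aform[OF that] I3[of "\<eta> v" u] etaGm that by simp
  have RR: "R = R_of G Gp Gm \<xi> \<eta> t"
  proof -
    have "R = S2 t (\<lambda>u v. inv (rmp (\<eta> v) u)) (\<lambda>u v. \<xi> u)" unfolding RS
      by (rule sec2_ext) (use Aform Bxi in simp)
    then show ?thesis using Rof_sec[of \<xi> \<eta> t] xiGm etaGm by simp
  qed
  have i1: "lpm v (\<xi> u) = \<xi> (lmp (\<eta> v) u)" if p: "u \<in> Gp" "v \<in> Gp" for u v
  proof -
    have "lpm v (B u (\<one> \<otimes> v)) = B (rpm u (A u v)) \<one>" using E[OF p(1) Gp_one p(2)] by blast
    then have "lpm v (B u v) = B (lmp (\<eta> v) u) \<one>" using p I3'[OF p] by simp
    then show ?thesis using p Bxi[OF p] unfolding \<xi>_def by simp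
  qed
  have i2: "rmp (\<eta> v) u = \<eta> (rpm v (\<xi> u))" if p: "u \<in> Gp" "v \<in> Gp" for u v
  proof -
    have "A (u \<otimes> \<one>) v = A \<one> (rpm v (B u v))" using D[OF p(1) Gp_one p(2)] by blast
    then have "A u v = A \<one> (rpm v (\<xi> u))" using p Bxi[OF p] by simp
    then have "inv (rmp (\<eta> v) u) = inv (\<eta> (rpm v (\<xi> u)))"
      using Aform[OF p] p AB xiGm[OF p(1)] unfolding \<eta>_def by simp
    then have "inv (inv (rmp (\<eta> v) u)) = inv (inv (\<eta> (rpm v (\<xi> u))))" by simp
    then show ?thesis using p etaGm xiGm by simp
  qed
  have i3: "t (u \<otimes> w) v = t u v * t w (rpm v (\<xi> u))" if p: "u \<in> Gp" "v \<in> Gp" "w \<in> Gp" for u v w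
  proof -
    have "t (u \<otimes> w) v = t u v * t w (rpm v (B u v))" using D[OF p(1) p(3) p(2)] by blast
    then show ?thesis using Bxi[OF p(1,2)] by simp
  qed
  have i4: "t u (w \<otimes> v) = t u v * t (lmp (\<eta> v) u) w" if p: "u \<in> Gp" "v \<in> Gp" "w \<in> Gp" for u v w
  proof -
    have "t u (w \<otimes> v) = t u v * t (rpm u (A u v)) w" using E[OF p(1) p(3) p(2)] by blast
    then show ?thesis using I3'[OF p(1,2)] by simp
  qed
  have hx: "\<xi> \<in> hom (G\<lparr>carrier := Gp\<rparr>) (G\<lparr>carrier := Gm\<rparr>)" unfolding hom_sub_iff using xiGm xihom by blast
  have he: "\<eta> \<in> hom (G\<lparr>carrier := Gp\<rparr>) (G\<lparr>carrier := Gm\<rparr>)" unfolding hom_sub_iff using etaGm etahom by blast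
  have adm: "admissible_data G Gp Gm \<xi> \<eta> t"
    unfolding admissible_data_def using hx he tpos i1 i2 i3 i4 by blast
  show ?thesis using adm RR by blast
qed

end

theorem proposition3:
  fixes G :: "'a monoid" and Gp Gm :: "'a set"
  assumes "unique_factorization G Gp Gm"
  shows "(\<forall>\<xi> \<eta> r. admissible_data G Gp Gm \<xi> \<eta> r \<longrightarrow>
            (let R = R_of G Gp Gm \<xi> \<eta> r in
               delta_id G Gp Gm R = mult3 G Gp Gm (leg13 Gp R) (leg23 Gp R) \<and>
               id_delta G Gp Gm R = mult3 G Gp Gm (leg13 Gp R) (leg12 Gp R)))
       \<and> (\<forall>R \<in> tens2 G.
            (positive2 R \<and>
             (\<exists>S \<in> tens2 G. mult2 G Gp Gm R S = one2 Gp \<and> mult2 G Gp Gm S R = one2 Gp \<and> positive2 S) \<and>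
             delta_id G Gp Gm R = mult3 G Gp Gm (leg13 Gp R) (leg23 Gp R) \<and>
             id_delta G Gp Gm R = mult3 G Gp Gm (leg13 Gp R) (leg12 Gp R))
            \<longrightarrow> (\<exists>\<xi> \<eta> r. admissible_data G Gp Gm \<xi> \<eta> r \<and> R = R_of G Gp Gm \<xi> \<eta> r))"
proof -
  interpret UF G Gp Gm by (rule UF.intro) (rule assms)
  show ?thesis
  proof (intro conjI allI impI ballI)
    fix \<xi> \<eta> r assume "admissible_data G Gp Gm \<xi> \<eta> r"
    then show "let R = R_of G Gp Gm \<xi> \<eta> r in
               delta_id G Gp Gm R = mult3 G Gp Gm (leg13 Gp R) (leg23 Gp R) \<and>
               id_delta G Gp Gm R = mult3 G Gp Gm (leg13 Gp R) (leg12 Gp R)"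
      unfolding Let_def by (rule forward)
  next
    fix R assume "R \<in> tens2 G" and h: "positive2 R \<and>
             (\<exists>S \<in> tens2 G. mult2 G Gp Gm R S = one2 Gp \<and> mult2 G Gp Gm S R = one2 Gp \<and> positive2 S) \<and>
             delta_id G Gp Gm R = mult3 G Gp Gm (leg13 Gp R) (leg23 Gp R) \<and>
             id_delta G Gp Gm R = mult3 G Gp Gm (leg13 Gp R) (leg12 Gp R)"
    then show "\<exists>\<xi> \<eta> r. admissible_data G Gp Gm \<xi> \<eta> r \<and> R = R_of G Gp Gm \<xi> \<eta> r"
      using converse by blast
  qed
qed

end
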